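(* Let $X$ be a proper geodesic hyperbolic space with a proper, isometric, non-elementary action of a group $\Gamma$. Let $G<\Gamma$ be an infinite subgroup of infinite index which is confined in $\Gamma$ with a finite confining subset $P$, and assume every nontrivial element of $P$ is loxodromic. Then $G$ contains infinitely many loxodromic elements $h_n$ escaping to infinity, i.e. $d(o,\mathbf{Ax}_G(h_n))\to\infty$.
   Context: $G<\Gamma$ is confined with confining subset $P$ ($P\subset\Gamma$ finite) if $gGg^{-1}\cap(P\setminus\{1\})\neq\emptyset$ for every $g\in\Gamma$. For loxodromic $g$, $\mathrm{Ax}(g)$ is the union of all bi-infinite geodesics between its fixed points in $\partial X$, and $\mathbf{Ax}_G(g)=\bigcup_{f\in G} f\,\mathrm{Ax}(g)$. *)

theory Defs
  imports "HOL-Analysis.Analysis" "HOL-Algebra.Group" "HOL-Algebra.Coset"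
begin

text \<open>The space X is a type of class heine_borel (closed bounded sets are compact,
i.e. X is a proper metric space).\<close>

definition gromov_prod :: "'a::metric_space \<Rightarrow> 'a \<Rightarrow> 'a \<Rightarrow> real" where
  "gromov_prod w x y = (dist w x + dist w y - dist x y) / 2"

definition gromov_hyperbolic :: "'a::metric_space itself \<Rightarrow> bool" where
  "gromov_hyperbolic _ \<longleftrightarrow> (\<exists>\<delta>::real. \<forall>(w::'a) x y z.
      gromov_prod w x z \<ge> min (gromov_prod w x y) (gromov_prod w y z) - \<delta>)"

definition geodesic_space :: "'a::metric_space itself \<Rightarrow> bool" where
  "geodesic_space _ \<longleftrightarrow> (\<forall>x y::'a. \<exists>\<gamma>::real \<Rightarrow> 'a. \<gamma> 0 = x \<and> \<gamma> (dist x y) = y \<and>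
      (\<forall>s\<in>{0..dist x y}. \<forall>t\<in>{0..dist x y}. dist (\<gamma> s) (\<gamma> t) = \<bar>s - t\<bar>))"

definition isometry :: "('a::metric_space \<Rightarrow> 'a) \<Rightarrow> bool" where
  "isometry f \<longleftrightarrow> surj f \<and> (\<forall>x y. dist (f x) (f y) = dist x y)"

definition isom_action :: "('g, 'b) monoid_scheme \<Rightarrow> ('g \<Rightarrow> 'a::metric_space \<Rightarrow> 'a) \<Rightarrow> bool" where
  "isom_action Gm \<phi> \<longleftrightarrow> group Gm \<and> (\<forall>g\<in>carrier Gm. isometry (\<phi> g)) \<and>
     (\<forall>g\<in>carrier Gm. \<forall>h\<in>carrier Gm. \<phi> (g \<otimes>\<^bsub>Gm\<^esub> h) = \<phi> g \<circ> \<phi> h) \<and>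
     \<phi> \<one>\<^bsub>Gm\<^esub> = id"

definition proper_action :: "('g, 'b) monoid_scheme \<Rightarrow> ('g \<Rightarrow> 'a::metric_space \<Rightarrow> 'a) \<Rightarrow> bool" where
  "proper_action Gm \<phi> \<longleftrightarrow> (\<forall>x r. finite {g\<in>carrier Gm. dist (\<phi> g x) x \<le> r})"

text \<open>Gromov boundary, via sequences converging at infinity (basepoint bp).\<close>
definition conv_inf :: "'a::metric_space \<Rightarrow> (nat \<Rightarrow> 'a) \<Rightarrow> bool" where
  "conv_inf bp x \<longleftrightarrow> (\<forall>M. \<exists>N. \<forall>i\<ge>N. \<forall>j\<ge>N. gromov_prod bp (x i) (x j) \<ge> M)"

definition seq_equiv :: "'a::metric_space \<Rightarrow> (nat \<Rightarrow> 'a) \<Rightarrow> (nat \<Rightarrow> 'a) \<Rightarrow> bool" where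
  "seq_equiv bp x y \<longleftrightarrow> conv_inf bp x \<and> conv_inf bp y \<and>
     (\<forall>M. \<exists>N. \<forall>i\<ge>N. \<forall>j\<ge>N. gromov_prod bp (x i) (y j) \<ge> M)"

definition bdry_pt :: "'a::metric_space \<Rightarrow> (nat \<Rightarrow> 'a) \<Rightarrow> (nat \<Rightarrow> 'a) set" where
  "bdry_pt bp x = {y. seq_equiv bp x y}"

definition limit_set :: "'a::metric_space \<Rightarrow> ('g, 'b) monoid_scheme \<Rightarrow> ('g \<Rightarrow> 'a \<Rightarrow> 'a) \<Rightarrow> (nat \<Rightarrow> 'a) set set" where
  "limit_set bp Gm \<phi> = {bdry_pt bp x | x. conv_inf bp x \<and> (\<forall>n. x n \<in> (\<lambda>g. \<phi> g bp) ` carrier Gm)}"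

definition non_elementary :: "'a::metric_space \<Rightarrow> ('g, 'b) monoid_scheme \<Rightarrow> ('g \<Rightarrow> 'a \<Rightarrow> 'a) \<Rightarrow> bool" where
  "non_elementary bp Gm \<phi> \<longleftrightarrow> (\<exists>\<xi>1 \<xi>2 \<xi>3. {\<xi>1, \<xi>2, \<xi>3} \<subseteq> limit_set bp Gm \<phi> \<and>
      \<xi>1 \<noteq> \<xi>2 \<and> \<xi>1 \<noteq> \<xi>3 \<and> \<xi>2 \<noteq> \<xi>3)"

definition loxodromic :: "'a::metric_space \<Rightarrow> ('g, 'b) monoid_scheme \<Rightarrow> ('g \<Rightarrow> 'a \<Rightarrow> 'a) \<Rightarrow> 'g \<Rightarrow> bool" where
  "loxodromic bp Gm \<phi> g \<longleftrightarrow> g \<in> carrier Gm \<and>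
     lim (\<lambda>n::nat. dist bp (\<phi> (g [^]\<^bsub>Gm\<^esub> n) bp) / real n) > 0"

definition fix_plus where
  "fix_plus bp Gm \<phi> g = bdry_pt bp (\<lambda>n::nat. \<phi> (g [^]\<^bsub>Gm\<^esub> n) bp)"
definition fix_minus where
  "fix_minus bp Gm \<phi> g = bdry_pt bp (\<lambda>n::nat. \<phi> ((inv\<^bsub>Gm\<^esub> g) [^]\<^bsub>Gm\<^esub> n) bp)"

definition geodesic_line :: "(real \<Rightarrow> 'a::metric_space) \<Rightarrow> bool" where
  "geodesic_line \<gamma> \<longleftrightarrow> (\<forall>s t. dist (\<gamma> s) (\<gamma> t) = \<bar>s - t\<bar>)"

definition Ax where
  "Ax bp Gm \<phi> g = \<Union>{range \<gamma> | \<gamma>. geodesic_line \<gamma> \<and>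
      conv_inf bp (\<lambda>n::nat. \<gamma> (real n)) \<and> conv_inf bp (\<lambda>n::nat. \<gamma> (- real n)) \<and>
      {bdry_pt bp (\<lambda>n::nat. \<gamma> (real n)), bdry_pt bp (\<lambda>n::nat. \<gamma> (- real n))}
        = {fix_plus bp Gm \<phi> g, fix_minus bp Gm \<phi> g}}"

definition AxG where
  "AxG bp Gm \<phi> H g = (\<Union>f\<in>H. \<phi> f ` Ax bp Gm \<phi> g)"

definition confined :: "('g, 'b) monoid_scheme \<Rightarrow> 'g set \<Rightarrow> 'g set \<Rightarrow> bool" where
  "confined Gm H P \<longleftrightarrow> finite P \<and> P \<subseteq> carrier Gm \<and>
     (\<forall>g\<in>carrier Gm. {g \<otimes>\<^bsub>Gm\<^esub> h \<otimes>\<^bsub>Gm\<^esub> inv\<^bsub>Gm\<^esub> g | h. h \<in> H} \<inter> (P - {\<one>\<^bsub>Gm\<^esub>}) \<noteq> {})"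

end

theory Submission
  imports Defs "HOL-Library.Diagonal_Subsequence"
begin

lemma gp_commute: "gromov_prod w x y = gromov_prod w y x"
  unfolding gromov_prod_def using dist_commute[of x y] by (simp add: field_simps)

lemma gp_nonneg: "0 \<le> gromov_prod w x y"
  unfolding gromov_prod_def using dist_triangle[of x y w] dist_commute[of x w] by (simp add: field_simps)

lemma gp_le1: "gromov_prod w x y \<le> dist w x"
  unfolding gromov_prod_def using dist_triangle[of w y x] dist_commute[of x y] by (simp add: field_simps)

lemma gp_le2: "gromov_prod w x y \<le> dist w y"
  using gp_le1[of w y x] gp_commute by metis

lemma gp_self: "gromov_prod w x x = dist w x"
  unfolding gromov_prod_def by simp

lemma gp_step: "dist w x - dist x y \<le> gromov_prod w x y"
  unfolding gromov_prod_def using dist_triangle[of w x y] dist_commute[of x y] by (simp add: field_simps)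

lemma gp_lip1: "gromov_prod w x y - dist x x' \<le> gromov_prod w x' y"
  unfolding gromov_prod_def using dist_triangle[of w x x'] dist_triangle[of x' y x] dist_commute[of x x']
  by (simp add: field_simps)

lemma gp_lip2: "gromov_prod w x y - dist y y' \<le> gromov_prod w x y'"
  using gp_lip1[of w y x y'] gp_commute by metis

lemma gp_base: "gromov_prod w x y - dist w w' \<le> gromov_prod w' x y"
  unfolding gromov_prod_def using dist_triangle[of w x w'] dist_triangle[of w y w'] dist_commute[of w w']
  by (simp add: field_simps)

lemma gp_isom:
  assumes "\<And>a b. dist (f a) (f b) = dist a b"
  shows "gromov_prod (f w) (f x) (f y) = gromov_prod w x y"
  unfolding gromov_prod_def assms ..

lemma gp_zero_between:
  assumes "dist x y + dist y z = dist x z"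
  shows "gromov_prod y x z = 0"
  using assms unfolding gromov_prod_def by (simp add: dist_commute)

lemma hyp_delta_nonneg:
  assumes hyp: "\<And>w x y z::'a::metric_space. min (gromov_prod w x y) (gromov_prod w y z) - \<delta> \<le> gromov_prod w x z"
  shows "0 \<le> \<delta>"
proof -
  fix a :: 'a
  have "min (gromov_prod a a a) (gromov_prod a a a) - \<delta> \<le> gromov_prod a a a" by (rule hyp)
  then show ?thesis by (simp add: gp_self)
qed

lemma hyp3:
  fixes w x y1 y2 z :: "'a::metric_space"
  assumes hyp: "\<And>w x y z::'a::metric_space. min (gromov_prod w x y) (gromov_prod w y z) - \<delta> \<le> gromov_prod w x z"
  shows "min (gromov_prod w x y1) (min (gromov_prod w y1 y2) (gromov_prod w y2 z)) - 2*\<delta> \<le> gromov_prod w x z"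
proof -
  have "min (gromov_prod w y1 y2) (gromov_prod w y2 z) - \<delta> \<le> gromov_prod w y1 z" by (rule hyp)
  moreover have "min (gromov_prod w x y1) (gromov_prod w y1 z) - \<delta> \<le> gromov_prod w x z" by (rule hyp)
  moreover have "0 \<le> \<delta>" by (rule hyp_delta_nonneg[OF hyp])
  ultimately show ?thesis by (smt (verit))
qed

lemma chain_fold:
  fixes c :: "nat \<Rightarrow> 'a::metric_space"
  assumes hyp: "\<And>w x y z::'a::metric_space. min (gromov_prod w x y) (gromov_prod w y z) - \<delta> \<le> gromov_prod w x z"
  shows "(\<And>k. k < n \<Longrightarrow> A + real (k+1) * \<delta> \<le> gromov_prod y (c k) (c (Suc k))) \<Longrightarrow>
     A \<le> dist y (c 0) \<Longrightarrow> A \<le> gromov_prod y (c 0) (c n)"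
proof (induction n arbitrary: c A)
  case 0
  then show ?case by (simp add: gp_self)
next
  case (Suc n)
  have h1: "A + \<delta> \<le> gromov_prod y (c 0) (c 1)" using Suc.prems(1)[of 0] by simp
  have IH: "A + \<delta> \<le> gromov_prod y ((c \<circ> Suc) 0) ((c \<circ> Suc) n)"
  proof (rule Suc.IH)
    fix k assume "k < n"
    then have "A + real (Suc k + 1) * \<delta> \<le> gromov_prod y (c (Suc k)) (c (Suc (Suc k)))"
      using Suc.prems(1)[of "Suc k"] by simp
    then show "A + \<delta> + real (k + 1) * \<delta> \<le> gromov_prod y ((c \<circ> Suc) k) ((c \<circ> Suc) (Suc k))"
      by (simp add: algebra_simps)
  next
    show "A + \<delta> \<le> dist y ((c \<circ> Suc) 0)" using h1 gp_le2[of y "c 0" "c 1"] by simp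
  qed
  have "min (gromov_prod y (c 0) (c 1)) (gromov_prod y (c 1) (c (Suc n))) - \<delta> \<le> gromov_prod y (c 0) (c (Suc n))"
    by (rule hyp)
  moreover have IH': "A + \<delta> \<le> gromov_prod y (c 1) (c (Suc n))" using IH by simp
  ultimately show ?case using h1 by (smt (verit))
qed

lemma one_side:
  fixes c :: "nat \<Rightarrow> 'a::metric_space"
  assumes hyp: "\<And>w x y z::'a. min (gromov_prod w x y) (gromov_prod w y z) - \<delta> \<le> gromov_prod w x z"
    and r: "dist y (c 0) = r"
    and rmin: "\<And>k. k \<le> n \<Longrightarrow> r \<le> dist y (c k)"
    and lo: "\<And>k. k \<le> n \<Longrightarrow> ell * real k \<le> dist (c 0) (c k)"
    and st: "\<And>k. dist (c k) (c (Suc k)) \<le> L"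
    and dl: "4*\<delta> \<le> ell" "0 \<le> \<delta>"
  shows "r/2 - L - \<delta> \<le> gromov_prod y (c 0) (c n)"
proof (rule chain_fold[OF hyp])
  have L0: "0 \<le> L" using st[of 0] zero_le_dist[of "c 0" "c (Suc 0)"] by linarith
  have r0: "0 \<le> r" using r by auto
  show "r / 2 - L - \<delta> \<le> dist y (c 0)" using r L0 r0 dl by simp
  fix k assume k: "k < n"
  have d1: "r \<le> dist y (c k)" using rmin k by simp
  have d2: "ell * real k - r \<le> dist y (c k)"
    using lo[of k] k dist_triangle[of "c 0" "c k" y] r by (simp add: dist_commute)
  have "4*\<delta>*real k \<le> ell * real k" by (rule mult_right_mono) (use dl in auto)
  then have kd: "real k * \<delta> \<le> ell * real k / 4" by (simp add: algebra_simps)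
  have "r/2 + real k * \<delta> \<le> dist y (c k)"
  proof (cases "ell * real k \<le> 2*r")
    case True then show ?thesis using d1 kd by linarith
  next
    case False then show ?thesis using d2 kd by linarith
  qed
  moreover have "dist y (c k) - L \<le> gromov_prod y (c k) (c (Suc k))"
    using gp_step[of y "c k" "c (Suc k)"] st[of k] by linarith
  ultimately show "r / 2 - L - \<delta> + real (k + 1) * \<delta> \<le> gromov_prod y (c k) (c (Suc k))"
    by (simp add: algebra_simps)
qed

lemma morse_Q:
  fixes b :: "int \<Rightarrow> 'a::metric_space"
  assumes hyp: "\<And>w x y z::'a. min (gromov_prod w x y) (gromov_prod w y z) - \<delta> \<le> gromov_prod w x z"
    and lo: "\<And>i j. ell * \<bar>real_of_int (i - j)\<bar> \<le> dist (b i) (b j)"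
    and st: "\<And>i. dist (b i) (b (i+1)) \<le> L"
    and dl: "4*\<delta> \<le> ell"
    and jj: "j \<le> j'" and C: "gromov_prod y (b j) (b j') \<le> C"
  shows "\<exists>i. j \<le> i \<and> i \<le> j' \<and> dist y (b i) \<le> 2*(C + L + 2*\<delta>)"
proof -
  have d0: "0 \<le> \<delta>" by (rule hyp_delta_nonneg[OF hyp])
  let ?S = "{j..j'}"
  have fin: "finite ?S" and ne: "?S \<noteq> {}" using jj by auto
  obtain i0 where i0: "i0 \<in> ?S" "\<And>i. i \<in> ?S \<Longrightarrow> dist y (b i0) \<le> dist y (b i)"
  proof -
    have "Min ((\<lambda>i. dist y (b i)) ` ?S) \<in> (\<lambda>i. dist y (b i)) ` ?S"
      using fin ne by (intro Min_in) auto
    then obtain i0 where "i0 \<in> ?S" "dist y (b i0) = Min ((\<lambda>i. dist y (b i)) ` ?S)" by auto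
    moreover have "\<And>i. i \<in> ?S \<Longrightarrow> Min ((\<lambda>i. dist y (b i)) ` ?S) \<le> dist y (b i)"
      using fin by (intro Min_le) auto
    ultimately show ?thesis using that by metis
  qed
  define r where "r = dist y (b i0)"
  have right: "r/2 - L - \<delta> \<le> gromov_prod y (b i0) (b j')"
  proof -
    define c where "c = (\<lambda>k::nat. b (i0 + int k))"
    define n where "n = nat (j' - i0)"
    have "r/2 - L - \<delta> \<le> gromov_prod y (c 0) (c n)"
    proof (rule one_side[OF hyp])
      show "dist y (c 0) = r" unfolding c_def r_def by simp
      show "r \<le> dist y (c k)" if "k \<le> n" for k
        unfolding r_def c_def using that i0 n_def by (intro i0(2)) auto
      show "ell * real k \<le> dist (c 0) (c k)" if "k \<le> n" for k
        using lo[of i0 "i0 + int k"] unfolding c_def by simp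
      show "dist (c k) (c (Suc k)) \<le> L" for k using st[of "i0 + int k"] unfolding c_def by (simp add: algebra_simps)
    qed (use dl d0 in auto)
    moreover have "c 0 = b i0" "c n = b j'" unfolding c_def n_def using i0 by auto
    ultimately show ?thesis by simp
  qed
  have left: "r/2 - L - \<delta> \<le> gromov_prod y (b i0) (b j)"
  proof -
    define c where "c = (\<lambda>k::nat. b (i0 - int k))"
    define n where "n = nat (i0 - j)"
    have "r/2 - L - \<delta> \<le> gromov_prod y (c 0) (c n)"
    proof (rule one_side[OF hyp])
      show "dist y (c 0) = r" unfolding c_def r_def by simp
      show "r \<le> dist y (c k)" if "k \<le> n" for k
        unfolding r_def c_def using that i0 n_def by (intro i0(2)) auto
      show "ell * real k \<le> dist (c 0) (c k)" if "k \<le> n" for k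
        using lo[of i0 "i0 - int k"] unfolding c_def by simp
      show "dist (c k) (c (Suc k)) \<le> L" for k using st[of "i0 - int k - 1"] unfolding c_def
        by (simp add: dist_commute algebra_simps)
    qed (use dl d0 in auto)
    moreover have "c 0 = b i0" "c n = b j" unfolding c_def n_def using i0 by auto
    ultimately show ?thesis by simp
  qed
  have "min (gromov_prod y (b j) (b i0)) (gromov_prod y (b i0) (b j')) - \<delta> \<le> gromov_prod y (b j) (b j')"
    by (rule hyp)
  with left right C have "r/2 - L - 2*\<delta> \<le> C" by (simp add: gp_commute[of y "b j" "b i0"])
  then have "r \<le> 2*(C + L + 2*\<delta>)" by simp
  then show ?thesis using i0 unfolding r_def by auto
qed

definition eqv :: "'a::metric_space \<Rightarrow> (nat \<Rightarrow> 'a) \<Rightarrow> (nat \<Rightarrow> 'a) \<Rightarrow> bool" where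
  "eqv w x y \<longleftrightarrow> (\<forall>M. \<exists>N. \<forall>i\<ge>N. \<forall>j\<ge>N. M \<le> gromov_prod w (x i) (y j))"

lemma conv_inf_eqv: "conv_inf w x = eqv w x x"
  unfolding conv_inf_def eqv_def ..

lemma seq_equiv_eqv: "seq_equiv w x y = (eqv w x x \<and> eqv w y y \<and> eqv w x y)"
  unfolding seq_equiv_def eqv_def conv_inf_def ..

lemma eqv_sym: "eqv w x y \<Longrightarrow> eqv w y x"
  unfolding eqv_def by (metis gp_commute)

lemma eqv_base:
  assumes "eqv w x y" shows "eqv w' x y"
  unfolding eqv_def
proof
  fix M
  obtain N where N: "\<forall>i\<ge>N. \<forall>j\<ge>N. M + dist w w' \<le> gromov_prod w (x i) (y j)"
    using assms unfolding eqv_def by blast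
  show "\<exists>N. \<forall>i\<ge>N. \<forall>j\<ge>N. M \<le> gromov_prod w' (x i) (y j)"
    by (rule exI[of _ N]) (smt (verit) N gp_base)
qed

lemma eqv_close2:
  assumes "eqv w x y" and c: "\<And>j. dist (y' j) (y (\<sigma> j)) \<le> c"
    and sig: "\<And>M. \<exists>N. \<forall>j\<ge>N. M \<le> \<sigma> j"
  shows "eqv w x y'"
  unfolding eqv_def
proof
  fix M
  obtain N where N: "\<forall>i\<ge>N. \<forall>j\<ge>N. M + c \<le> gromov_prod w (x i) (y j)"
    using assms unfolding eqv_def by blast
  obtain N' where N': "\<forall>j\<ge>N'. N \<le> \<sigma> j" using sig by blast
  show "\<exists>N. \<forall>i\<ge>N. \<forall>j\<ge>N. M \<le> gromov_prod w (x i) (y' j)"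
  proof (rule exI[of _ "max N N'"], intro allI impI)
    fix i j assume "max N N' \<le> i" "max N N' \<le> j"
    then have "M + c \<le> gromov_prod w (x i) (y (\<sigma> j))" using N N' by auto
    moreover have "gromov_prod w (x i) (y (\<sigma> j)) - dist (y (\<sigma> j)) (y' j) \<le> gromov_prod w (x i) (y' j)"
      by (rule gp_lip2)
    ultimately show "M \<le> gromov_prod w (x i) (y' j)" using c[of j] by (simp add: dist_commute)
  qed
qed

lemma eqv_trans:
  fixes w :: "'a::metric_space" and x y z :: "nat \<Rightarrow> 'a"
  assumes hyp: "\<And>w x y z::'a::metric_space. min (gromov_prod w x y) (gromov_prod w y z) - \<delta> \<le> gromov_prod w x z"
    and "eqv w x y" "eqv w y z"
  shows "eqv w x z"
  unfolding eqv_def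
proof
  fix M
  obtain N1 where N1: "\<forall>i\<ge>N1. \<forall>j\<ge>N1. M + \<delta> \<le> gromov_prod w (x i) (y j)"
    using assms unfolding eqv_def by blast
  obtain N2 where N2: "\<forall>i\<ge>N2. \<forall>j\<ge>N2. M + \<delta> \<le> gromov_prod w (y i) (z j)"
    using assms unfolding eqv_def by blast
  show "\<exists>N. \<forall>i\<ge>N. \<forall>j\<ge>N. M \<le> gromov_prod w (x i) (z j)"
  proof (rule exI[of _ "max N1 N2"], intro allI impI)
    fix i j assume "max N1 N2 \<le> i" "max N1 N2 \<le> j"
    then have "M + \<delta> \<le> gromov_prod w (x i) (y (max N1 N2))" "M + \<delta> \<le> gromov_prod w (y (max N1 N2)) (z j)"
      using N1 N2 by auto
    moreover have "min (gromov_prod w (x i) (y (max N1 N2))) (gromov_prod w (y (max N1 N2)) (z j)) - \<delta> \<le> gromov_prod w (x i) (z j)"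
      by (rule hyp)
    ultimately show "M \<le> gromov_prod w (x i) (z j)" by (smt (verit))
  qed
qed

lemma bdry_eq:
  fixes w :: "'a::metric_space" and x y :: "nat \<Rightarrow> 'a"
  assumes hyp: "\<And>w x y z::'a::metric_space. min (gromov_prod w x y) (gromov_prod w y z) - \<delta> \<le> gromov_prod w x z"
    and "seq_equiv w x y"
  shows "bdry_pt w x = bdry_pt w y"
  unfolding bdry_pt_def
proof (intro Collect_cong iffI)
  fix z
  have xy: "eqv w x y" "eqv w x x" "eqv w y y" using assms(2) seq_equiv_eqv by auto
  show "seq_equiv w y z" if "seq_equiv w x z"
    using that xy eqv_trans[OF hyp, of w y x z] eqv_sym unfolding seq_equiv_eqv by blast
  show "seq_equiv w x z" if "seq_equiv w y z"
    using that xy eqv_trans[OF hyp, of w x y z] unfolding seq_equiv_eqv by blast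
qed

lemma in_bdry: "conv_inf w x \<Longrightarrow> x \<in> bdry_pt w x"
  unfolding bdry_pt_def seq_equiv_def conv_inf_def by simp

lemma in_bdry_seq_equiv: "y \<in> bdry_pt w x \<Longrightarrow> seq_equiv w x y"
  unfolding bdry_pt_def by simp

lemma orbit_conv_pos:
  fixes b :: "int \<Rightarrow> 'a::metric_space"
  assumes hyp: "\<And>w x y z::'a. min (gromov_prod w x y) (gromov_prod w y z) - \<delta> \<le> gromov_prod w x z"
    and lo: "\<And>i j. ell * \<bar>real_of_int (i - j)\<bar> \<le> dist (b i) (b j)"
    and st: "\<And>i. dist (b i) (b (i+1)) \<le> L"
    and dl: "4*\<delta> \<le> ell" and ell: "0 < ell"
  shows "eqv w (\<lambda>n. b (int n)) (\<lambda>n. b (int n))"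
proof -
  have "eqv (b 0) (\<lambda>n. b (int n)) (\<lambda>n. b (int n))"
    unfolding eqv_def
  proof
    fix M
    define D where "D = 2*(M + L + 2*\<delta>)"
    obtain N :: nat where N: "D / ell < real N" using reals_Archimedean2 by blast
    show "\<exists>N. \<forall>i\<ge>N. \<forall>j\<ge>N. M \<le> gromov_prod (b 0) (b (int i)) (b (int j))"
    proof (rule exI[of _ N], intro allI impI, rule ccontr)
      fix i j assume ij: "N \<le> i" "N \<le> j" and "\<not> M \<le> gromov_prod (b 0) (b (int i)) (b (int j))"
      then have C: "gromov_prod (b 0) (b (int (min i j))) (b (int (max i j))) \<le> M"
        by (cases "i \<le> j") (auto simp: gp_commute max_def min_def)
      have mm: "int (min i j) \<le> int (max i j)" by simp
      obtain k where k: "int (min i j) \<le> k" "k \<le> int (max i j)" "dist (b 0) (b k) \<le> D"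
        using morse_Q[OF hyp lo st dl mm C] unfolding D_def by blast
      have "ell * \<bar>real_of_int (0 - k)\<bar> \<le> dist (b 0) (b k)" by (rule lo)
      moreover have "real N \<le> \<bar>real_of_int (0 - k)\<bar>" using k ij by auto
      ultimately have "ell * real N \<le> D" using k ell
        by (smt (verit) mult_left_mono)
      then show False using N ell by (simp add: field_simps)
    qed
  qed
  then show ?thesis by (rule eqv_base)
qed

lemma reflect_hyps:
  fixes b :: "int \<Rightarrow> 'a::metric_space"
  assumes lo: "\<And>i j. ell * \<bar>real_of_int (i - j)\<bar> \<le> dist (b i) (b j)"
    and st: "\<And>i. dist (b i) (b (i+1)) \<le> L"
  shows "\<And>i j. ell * \<bar>real_of_int (i - j)\<bar> \<le> dist (b (-i)) (b (-j))"
    and "\<And>i. dist (b (-i)) (b (-(i+1))) \<le> L"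
proof -
  fix i j
  show "ell * \<bar>real_of_int (i - j)\<bar> \<le> dist (b (-i)) (b (-j))"
    using lo[of "-i" "-j"] by (simp add: abs_minus_commute)
next
  fix i
  show "dist (b (-i)) (b (-(i+1))) \<le> L"
    using st[of "-i - 1"] by (simp add: dist_commute)
qed

lemma orbit_conv_neg:
  fixes b :: "int \<Rightarrow> 'a::metric_space"
  assumes hyp: "\<And>w x y z::'a. min (gromov_prod w x y) (gromov_prod w y z) - \<delta> \<le> gromov_prod w x z"
    and lo: "\<And>i j. ell * \<bar>real_of_int (i - j)\<bar> \<le> dist (b i) (b j)"
    and st: "\<And>i. dist (b i) (b (i+1)) \<le> L"
    and dl: "4*\<delta> \<le> ell" and ell: "0 < ell"
  shows "eqv w (\<lambda>n. b (- int n)) (\<lambda>n. b (- int n))"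
  using orbit_conv_pos[OF hyp, of ell "\<lambda>i. b (-i)" L w] reflect_hyps[OF lo st] dl ell by auto

lemma line_near_orbit:
  fixes b :: "int \<Rightarrow> 'a::metric_space"
  assumes hyp: "\<And>w x y z::'a. min (gromov_prod w x y) (gromov_prod w y z) - \<delta> \<le> gromov_prod w x z"
    and lo: "\<And>i j. ell * \<bar>real_of_int (i - j)\<bar> \<le> dist (b i) (b j)"
    and st: "\<And>i. dist (b i) (b (i+1)) \<le> L"
    and dl: "4*\<delta> \<le> ell"
    and gl: "geodesic_line \<gamma>"
    and ends: "(eqv w (\<lambda>n. \<gamma> (real n)) (\<lambda>n. b (int n)) \<and> eqv w (\<lambda>n. \<gamma> (- real n)) (\<lambda>n. b (- int n))) \<or>
               (eqv w (\<lambda>n. \<gamma> (real n)) (\<lambda>n. b (- int n)) \<and> eqv w (\<lambda>n. \<gamma> (- real n)) (\<lambda>n. b (int n)))"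
  shows "\<exists>i. dist (\<gamma> s) (b i) \<le> 2*(2*\<delta> + L + 2*\<delta>)"
proof -
  define x where "x = \<gamma> s"
  define M where "M = dist w x + 2*\<delta> + 1"
  have d0: "0 \<le> \<delta>" by (rule hyp_delta_nonneg[OF hyp])
  have key: "\<exists>n::nat. gromov_prod x (\<gamma> (- real n)) (\<gamma> (real n)) = 0 \<and>
      M \<le> gromov_prod w (\<gamma> (- real n)) (b (e * int n)) \<and> M \<le> gromov_prod w (b (- e * int n)) (\<gamma> (real n))"
    if e: "eqv w (\<lambda>n. \<gamma> (real n)) (\<lambda>n. b (- e * int n))" "eqv w (\<lambda>n. \<gamma> (- real n)) (\<lambda>n. b (e * int n))"
    for e :: int
  proof -
    obtain N1 where N1: "\<forall>i\<ge>N1. \<forall>j\<ge>N1. M \<le> gromov_prod w (\<gamma> (real i)) (b (- e * int j))"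
      using e(1) unfolding eqv_def by blast
    obtain N2 where N2: "\<forall>i\<ge>N2. \<forall>j\<ge>N2. M \<le> gromov_prod w (\<gamma> (- real i)) (b (e * int j))"
      using e(2) unfolding eqv_def by blast
    obtain N3 :: nat where N3: "\<bar>s\<bar> \<le> real N3" using real_arch_simple by blast
    define n where "n = max N1 (max N2 N3)"
    have "dist (\<gamma> (- real n)) x + dist x (\<gamma> (real n)) = dist (\<gamma> (- real n)) (\<gamma> (real n))"
      using gl N3 unfolding geodesic_line_def x_def n_def by auto
    then have "gromov_prod x (\<gamma> (- real n)) (\<gamma> (real n)) = 0" by (rule gp_zero_between)
    moreover have "M \<le> gromov_prod w (\<gamma> (- real n)) (b (e * int n))" using N2 unfolding n_def by auto
    moreover have "M \<le> gromov_prod w (b (- e * int n)) (\<gamma> (real n))" using N1 unfolding n_def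
      by (auto simp: gp_commute)
    ultimately show ?thesis by blast
  qed
  have main: "\<exists>i. dist x (b i) \<le> 2*(2*\<delta> + L + 2*\<delta>)"
    if e: "eqv w (\<lambda>n. \<gamma> (real n)) (\<lambda>n. b (- e * int n))" "eqv w (\<lambda>n. \<gamma> (- real n)) (\<lambda>n. b (e * int n))"
      and e1: "e = 1 \<or> e = -1"
    for e :: int
  proof -
    obtain n :: nat where n: "gromov_prod x (\<gamma> (- real n)) (\<gamma> (real n)) = 0"
      "M \<le> gromov_prod w (\<gamma> (- real n)) (b (e * int n))" "M \<le> gromov_prod w (b (- e * int n)) (\<gamma> (real n))"
      using key[OF e] by blast
    have a1: "M - dist w x \<le> gromov_prod x (\<gamma> (- real n)) (b (e * int n))"
      using n(2) gp_base[of w "\<gamma> (- real n)" "b (e * int n)" x] by linarith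
    have a2: "M - dist w x \<le> gromov_prod x (b (- e * int n)) (\<gamma> (real n))"
      using n(3) gp_base[of w "b (- e * int n)" "\<gamma> (real n)" x] by linarith
    have "min (gromov_prod x (\<gamma> (- real n)) (b (e * int n)))
       (min (gromov_prod x (b (e * int n)) (b (- e * int n))) (gromov_prod x (b (- e * int n)) (\<gamma> (real n)))) - 2*\<delta>
       \<le> gromov_prod x (\<gamma> (- real n)) (\<gamma> (real n))"
      by (rule hyp3[OF hyp])
    with a1 a2 n(1) have C: "gromov_prod x (b (e * int n)) (b (- e * int n)) \<le> 2*\<delta>"
      unfolding M_def by (smt (verit))
    show ?thesis
    proof (cases "e = 1")
      case True
      then have "gromov_prod x (b (- int n)) (b (int n)) \<le> 2*\<delta>" using C by (simp add: gp_commute)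
      from morse_Q[OF hyp lo st dl _ this] show ?thesis by auto
    next
      case False
      then have "e = -1" using e1 by auto
      then have "gromov_prod x (b (- int n)) (b (int n)) \<le> 2*\<delta>" using C by simp
      from morse_Q[OF hyp lo st dl _ this] show ?thesis by auto
    qed
  qed
  from ends show ?thesis
  proof
    assume a: "eqv w (\<lambda>n. \<gamma> (real n)) (\<lambda>n. b (int n)) \<and> eqv w (\<lambda>n. \<gamma> (- real n)) (\<lambda>n. b (- int n))"
    show ?thesis using main[of "-1"] a unfolding x_def by simp
  next
    assume a: "eqv w (\<lambda>n. \<gamma> (real n)) (\<lambda>n. b (- int n)) \<and> eqv w (\<lambda>n. \<gamma> (- real n)) (\<lambda>n. b (int n))"
    show ?thesis using main[of "1"] a unfolding x_def by simp
  qed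
qed

lemma diag_extract:
  fixes f :: "nat \<Rightarrow> real \<Rightarrow> 'a::heine_borel" and r :: "nat \<Rightarrow> real"
  assumes bnd: "\<And>m. bounded (range (\<lambda>n. f n (r m)))"
  shows "\<exists>d. strict_mono d \<and> (\<forall>m. convergent (\<lambda>k. f (d k) (r m)))"
proof -
  let ?P = "\<lambda>n. \<lambda>s. convergent (\<lambda>k. f (s k) (r n))"
  interpret nat: subseqs ?P
  proof (unfold subseqs_def, intro allI impI)
    fix n :: nat and s :: "nat \<Rightarrow> nat" assume s: "strict_mono s"
    have "bounded (range (\<lambda>k. f (s k) (r n)))"
      by (rule bounded_subset[OF bnd[of n]]) auto
    then obtain l r' where "strict_mono r'" "((\<lambda>k. f (s k) (r n)) \<circ> r') \<longlonglongrightarrow> l"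
      using bounded_imp_convergent_subsequence by blast
    then show "\<exists>r'. strict_mono r' \<and> convergent (\<lambda>k. f ((s \<circ> r') k) (r n))"
      by (auto simp: convergent_def o_def)
  qed
  define d where "d = nat.diagseq"
  have subseq: "strict_mono d"
    unfolding d_def using nat.subseq_diagseq by auto
  have rat_cnv: "?P n d" for n
  proof -
    have Pn_seqseq: "?P n (nat.seqseq (Suc n))"
      by (rule nat.seqseq_holds)
    have 1: "(\<lambda>k. f ((nat.seqseq (Suc n) \<circ> (\<lambda>k. nat.fold_reduce (Suc n) k
      (Suc n + k))) k) (r n)) = (\<lambda>k. f (nat.seqseq (Suc n) k) (r n)) \<circ>
      (\<lambda>k. nat.fold_reduce (Suc n) k (Suc n + k))"
      by auto
    have 2: "?P n (d \<circ> ((+) (Suc n)))"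
      unfolding d_def nat.diagseq_seqseq 1
      by (intro convergent_subseq_convergent Pn_seqseq nat.subseq_diagonal_rest)
    then obtain L where 3: "(\<lambda>na. f (d (na + Suc n)) (r n)) \<longlonglongrightarrow> L"
      by (auto simp: add.commute dest: convergentD)
    then have "(\<lambda>k. f (d k) (r n)) \<longlonglongrightarrow> L"
      by (rule LIMSEQ_offset)
    then show ?thesis
      by (auto simp: convergent_def)
  qed
  show ?thesis using subseq rat_cnv by blast
qed

lemma clamp_lip: "\<bar>max 0 (min d (a + t)) - max 0 (min d (a + t'))\<bar> \<le> \<bar>t - t'\<bar>"
  for d a t t' :: real
  unfolding min_def max_def by auto

lemma exists_line:
  fixes b :: "int \<Rightarrow> 'a::heine_borel"
  assumes geod: "geodesic_space TYPE('a)"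
    and hyp: "\<And>w x y z::'a. min (gromov_prod w x y) (gromov_prod w y z) - \<delta> \<le> gromov_prod w x z"
    and lo: "\<And>i j. ell * \<bar>real_of_int (i - j)\<bar> \<le> dist (b i) (b j)"
    and up: "\<And>i j. dist (b i) (b j) \<le> L * \<bar>real_of_int (i - j)\<bar>"
    and dl: "4*\<delta> \<le> ell" and ell: "0 < ell"
  shows "\<exists>\<gamma> E. geodesic_line \<gamma> \<and> (\<forall>t\<ge>0. \<exists>j\<ge>0. dist (\<gamma> t) (b j) \<le> E) \<and> (\<forall>t\<le>0. \<exists>j\<le>0. dist (\<gamma> t) (b j) \<le> E)"
proof -
  have st: "\<And>i. dist (b i) (b (i+1)) \<le> L" using up by (metis abs_minus_cancel abs_one diff_add_cancel diff_diff_eq2 minus_diff_eq mult.right_neutral of_int_1 of_int_minus add_diff_cancel_left')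
  have d0: "0 \<le> \<delta>" by (rule hyp_delta_nonneg[OF hyp])
  have L0: "0 \<le> L" using st[of 0] zero_le_dist[of "b 0" "b (0+1)"] by linarith
  define D0 where "D0 = 2*(0 + L + 2*\<delta>)"
  define D1 where "D1 = D0 + L * ((2*D0+1)/ell)"
  define E0 where "E0 = 2*(D1 + L + 2*\<delta>)"
  have D00: "0 \<le> D0" unfolding D0_def using L0 d0 by simp
  define dd where "dd n = dist (b (- int n)) (b (int n))" for n :: nat
  have "\<forall>n::nat. \<exists>g. g 0 = b (- int n) \<and> g (dd n) = b (int n) \<and>
      (\<forall>s\<in>{0..dd n}. \<forall>t\<in>{0..dd n}. dist (g s) (g t) = \<bar>s - t\<bar>)"
    using geod unfolding geodesic_space_def dd_def by blast
  then obtain c where c: "\<And>n. c n 0 = b (- int n)" "\<And>n. c n (dd n) = b (int n)"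
    "\<And>n s t. s\<in>{0..dd n} \<Longrightarrow> t\<in>{0..dd n} \<Longrightarrow> dist (c n s) (c n t) = \<bar>s - t\<bar>"
    by metis
  have dd0: "0 \<le> dd n" for n unfolding dd_def by simp
  have dist0: "dist (b (- int n)) (c n s) = s" if "s \<in> {0..dd n}" for n s
    using c(3)[of 0 n s] c(1)[of n] that dd0[of n] by auto
  have distn: "dist (c n s) (b (int n)) = dd n - s" if "s \<in> {0..dd n}" for n s
    using c(3)[of s n "dd n"] c(2)[of n] that dd0[of n] by auto
  have near: "\<exists>i. - int n \<le> i \<and> i \<le> int n \<and> dist (c n s) (b i) \<le> D0" if "s \<in> {0..dd n}" for n s
  proof -
    have "dist (b (- int n)) (c n s) + dist (c n s) (b (int n)) = dist (b (- int n)) (b (int n))"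
      using dist0[OF that] distn[OF that] unfolding dd_def by simp
    from gp_zero_between[OF this] have "gromov_prod (c n s) (b (- int n)) (b (int n)) \<le> 0" by simp
    from morse_Q[OF hyp lo st dl _ this] show ?thesis unfolding D0_def by auto
  qed
  have mid: "\<exists>s\<in>{0..dd n}. dist (c n s) (b 0) \<le> D1" for n
  proof -
    define sg where "sg k = min (real k) (dd n)" for k :: nat
    have sgin: "sg k \<in> {0..dd n}" for k unfolding sg_def using dd0[of n] by auto
    define pos where "pos k = (\<exists>i\<ge>0. dist (c n (sg k)) (b i) \<le> D0)" for k
    define neg where "neg k = (\<exists>i\<le>0. dist (c n (sg k)) (b i) \<le> D0)" for k
    have pn: "pos k \<or> neg k" for k
      using near[OF sgin[of k]] unfolding pos_def neg_def by (meson linorder_le_cases)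
    define K where "K = nat \<lceil>dd n\<rceil>"
    have "dd n \<le> real K" unfolding K_def by (rule real_nat_ceiling_ge)
    then have "sg K = dd n" unfolding sg_def by (simp add: min_def)
    then have posK: "pos K" unfolding pos_def using c(2)[of n] D00 by (intro exI[of _ "int n"]) auto
    have neg0: "neg 0" unfolding neg_def sg_def using c(1)[of n] D00 dd0[of n]
      by (intro exI[of _ "- int n"]) auto
    define ks where "ks = (LEAST k. pos k)"
    have pks: "pos ks" unfolding ks_def using posK by (rule LeastI)
    have "\<exists>i' \<le> 0. dist (c n (sg ks)) (b i') \<le> D0 + 1"
    proof (cases ks)
      case 0 then show ?thesis using neg0 unfolding neg_def by force
    next
      case (Suc k')
      then have "\<not> pos k'" unfolding ks_def using not_less_Least by (metis lessI)
      then have "neg k'" using pn by blast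
      then obtain i' where i': "i' \<le> 0" "dist (c n (sg k')) (b i') \<le> D0" unfolding neg_def by blast
      have "dist (c n (sg ks)) (c n (sg k')) = \<bar>sg ks - sg k'\<bar>" using c(3) sgin by blast
      also have "\<dots> \<le> 1" unfolding sg_def Suc by (simp add: min_def)
      finally show ?thesis using i' dist_triangle[of "c n (sg ks)" "b i'" "c n (sg k')"] by (intro exI[of _ i']) auto
    qed
    then obtain i' where i': "i' \<le> 0" "dist (c n (sg ks)) (b i') \<le> D0 + 1" by blast
    obtain i where i: "i \<ge> 0" "dist (c n (sg ks)) (b i) \<le> D0" using pks unfolding pos_def by blast
    have "dist (b i) (b i') \<le> 2*D0 + 1" using i i' dist_triangle[of "b i" "b i'" "c n (sg ks)"]
      by (simp add: dist_commute)
    moreover have "ell * \<bar>real_of_int (i - i')\<bar> \<le> dist (b i) (b i')" by (rule lo)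
    moreover have "ell * real_of_int i \<le> ell * \<bar>real_of_int (i - i')\<bar>" using i i' ell by auto
    ultimately have "ell * real_of_int i \<le> 2*D0+1" by linarith
    then have ii: "real_of_int i \<le> (2*D0+1)/ell" using ell by (simp add: field_simps)
    have "dist (b i) (b 0) \<le> L * \<bar>real_of_int (i - 0)\<bar>" by (rule up)
    also have "\<dots> \<le> L * ((2*D0+1)/ell)" using mult_left_mono[OF ii L0] i by simp
    finally have "dist (c n (sg ks)) (b 0) \<le> D1" unfolding D1_def
      using i dist_triangle[of "c n (sg ks)" "b 0" "b i"] by linarith
    then show ?thesis using sgin by blast
  qed
  then obtain s where s: "\<And>n. s n \<in> {0..dd n}" "\<And>n. dist (c n (s n)) (b 0) \<le> D1" by metis
  have sl: "ell * real n - D1 \<le> s n" for n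
  proof -
    have "ell * \<bar>real_of_int (- int n - 0)\<bar> \<le> dist (b (- int n)) (b 0)" by (rule lo)
    then have "ell * real n \<le> dist (b (- int n)) (b 0)" by simp
    moreover have "dist (b (- int n)) (b 0) \<le> dist (b (- int n)) (c n (s n)) + dist (c n (s n)) (b 0)"
      by (rule dist_triangle)
    ultimately show ?thesis using dist0[OF s(1)[of n]] s(2)[of n] by linarith
  qed
  have sr: "ell * real n - D1 \<le> dd n - s n" for n
  proof -
    have "ell * \<bar>real_of_int (0 - int n)\<bar> \<le> dist (b 0) (b (int n))" by (rule lo)
    then have "ell * real n \<le> dist (b 0) (b (int n))" by simp
    moreover have "dist (b 0) (b (int n)) \<le> dist (b 0) (c n (s n)) + dist (c n (s n)) (b (int n))"
      by (rule dist_triangle)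
    ultimately show ?thesis using distn[OF s(1)[of n]] s(2)[of n] by (simp add: dist_commute)
  qed
  define g where "g n t = c n (max 0 (min (dd n) (s n + t)))" for n t
  have clin: "max 0 (min (dd n) (s n + t)) \<in> {0..dd n}" for n t using dd0[of n] by auto
  have glip: "dist (g n t) (g n t') \<le> \<bar>t - t'\<bar>" for n t t'
    unfolding g_def using c(3)[OF clin clin] clamp_lip by metis
  have clid: "max 0 (min (dd n) (s n + t)) = s n + t" if "\<bar>t\<bar> \<le> ell * real n - D1" for n t
    using that sl[of n] sr[of n] by auto
  have giso: "dist (g n t) (g n t') = \<bar>t - t'\<bar>" if "\<bar>t\<bar> \<le> ell * real n - D1" "\<bar>t'\<bar> \<le> ell * real n - D1" for n t t'
    unfolding g_def using c(3)[OF clin clin, of n t t'] clid[OF that(1)] clid[OF that(2)] by simp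
  have g0: "dist (g n 0) (b 0) \<le> D1" for n
  proof -
    have "max 0 (min (dd n) (s n + 0)) = s n" using s(1)[of n] by auto
    then show ?thesis unfolding g_def using s(2)[of n] by simp
  qed
  have gpos: "\<exists>i\<ge>0. dist (g n t) (b i) \<le> E0" if "0 \<le> t" "t \<le> ell * real n - D1" for n t
  proof -
    have t: "\<bar>t\<bar> \<le> ell * real n - D1" using that by simp
    define y where "y = c n (s n + t)"
    have gy: "g n t = y" unfolding g_def y_def using clid[OF t] by simp
    have i1: "s n + t \<in> {0..dd n}" using clin[of n t] clid[OF t] by metis
    have "dist (c n (s n)) y = t" unfolding y_def using c(3)[OF s(1)[of n] i1] that by simp
    moreover have "dist y (b (int n)) = dd n - (s n + t)" unfolding y_def by (rule distn[OF i1])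
    moreover have "dist (c n (s n)) (b (int n)) = dd n - s n" by (rule distn[OF s(1)[of n]])
    ultimately have "dist (c n (s n)) y + dist y (b (int n)) = dist (c n (s n)) (b (int n))" by simp
    then have z: "gromov_prod y (c n (s n)) (b (int n)) = 0" by (rule gp_zero_between)
    have "gromov_prod y (b 0) (b (int n)) - dist (b 0) (c n (s n)) \<le> gromov_prod y (c n (s n)) (b (int n))"
      by (rule gp_lip1)
    then have C: "gromov_prod y (b 0) (b (int n)) \<le> D1" using z s(2)[of n] by (simp add: dist_commute)
    have "(0::int) \<le> int n" by simp
    from morse_Q[OF hyp lo st dl this C] show ?thesis unfolding gy E0_def by auto
  qed
  have gneg: "\<exists>i\<le>0. dist (g n t) (b i) \<le> E0" if "t \<le> 0" "- t \<le> ell * real n - D1" for n t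
  proof -
    have t: "\<bar>t\<bar> \<le> ell * real n - D1" using that by simp
    define y where "y = c n (s n + t)"
    have gy: "g n t = y" unfolding g_def y_def using clid[OF t] by simp
    have i1: "s n + t \<in> {0..dd n}" using clin[of n t] clid[OF t] by metis
    have "dist y (c n (s n)) = - t" unfolding y_def using c(3)[OF i1 s(1)[of n]] that by simp
    moreover have "dist (b (- int n)) y = s n + t" unfolding y_def by (rule dist0[OF i1])
    moreover have "dist (b (- int n)) (c n (s n)) = s n" by (rule dist0[OF s(1)[of n]])
    ultimately have "dist (b (- int n)) y + dist y (c n (s n)) = dist (b (- int n)) (c n (s n))" by simp
    then have z: "gromov_prod y (b (- int n)) (c n (s n)) = 0" by (rule gp_zero_between)
    have "gromov_prod y (b (- int n)) (b 0) - dist (b 0) (c n (s n)) \<le> gromov_prod y (b (- int n)) (c n (s n))"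
      by (rule gp_lip2)
    then have C: "gromov_prod y (b (- int n)) (b 0) \<le> D1" using z s(2)[of n] by (simp add: dist_commute)
    have "- int n \<le> 0" by simp
    from morse_Q[OF hyp lo st dl this C] show ?thesis unfolding gy E0_def by auto
  qed
  have gbnd: "dist (g n t) (b 0) \<le> \<bar>t\<bar> + D1" for n t
    using glip[of n t 0] g0[of n] dist_triangle[of "g n t" "b 0" "g n 0"] by simp
  obtain mq :: "real \<Rightarrow> nat" where "bij_betw mq \<rat> UNIV"
    using countable_rat Rats_infinite by (erule countableE_infinite)
  then obtain r :: "nat \<Rightarrow> real" where bij: "bij_betw r UNIV \<rat>"
    using bij_betw_inv by blast
  have dense_r: "\<And>x y. x < y \<Longrightarrow> \<exists>n. x < r n \<and> r n < y"
    by (metis Rats_dense_in_real bij f_the_inv_into_f bij_betw_def)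
  have "bounded (range (\<lambda>n. g n (r m)))" for m
    by (rule bounded_subset[OF bounded_cball[of "b 0" "\<bar>r m\<bar> + D1"]])
       (use gbnd in \<open>auto simp: dist_commute\<close>)
  then obtain sq where sq: "strict_mono sq" "\<And>m. convergent (\<lambda>k. g (sq k) (r m))"
    using diag_extract[of g r] by blast
  have cv: "convergent (\<lambda>k. g (sq k) t)" for t
  proof -
    have "Cauchy (\<lambda>k. g (sq k) t)"
      unfolding Cauchy_def
    proof (intro allI impI)
      fix e :: real assume e: "0 < e"
      obtain m where m: "t - e/3 < r m" "r m < t + e/3" using dense_r[of "t - e/3" "t + e/3"] e by auto
      have "Cauchy (\<lambda>k. g (sq k) (r m))" using sq(2)[of m] by (rule convergent_Cauchy)
      then obtain M where M: "\<And>k k'. k \<ge> M \<Longrightarrow> k' \<ge> M \<Longrightarrow> dist (g (sq k) (r m)) (g (sq k') (r m)) < e/3"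
        unfolding Cauchy_def using e by (meson divide_pos_pos zero_less_numeral)
      show "\<exists>M. \<forall>k\<ge>M. \<forall>k'\<ge>M. dist (g (sq k) t) (g (sq k') t) < e"
      proof (intro exI allI impI)
        fix k k' assume kk: "M \<le> k" "M \<le> k'"
        have "dist (g (sq k) t) (g (sq k') t) \<le> dist (g (sq k) t) (g (sq k) (r m)) + dist (g (sq k) (r m)) (g (sq k') t)"
          by (rule dist_triangle)
        also have "\<dots> \<le> dist (g (sq k) t) (g (sq k) (r m)) + (dist (g (sq k) (r m)) (g (sq k') (r m)) + dist (g (sq k') (r m)) (g (sq k') t))"
          using dist_triangle by auto
        finally have "dist (g (sq k) t) (g (sq k') t) \<le> \<bar>t - r m\<bar> + (dist (g (sq k) (r m)) (g (sq k') (r m)) + \<bar>r m - t\<bar>)"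
          using glip[of "sq k" t "r m"] glip[of "sq k'" "r m" t] by linarith
        then show "dist (g (sq k) t) (g (sq k') t) < e" using M[OF kk] m by (simp add: abs_if split: if_splits) linarith?
      qed
    qed
    then show ?thesis by (rule Cauchy_convergent)
  qed
  define \<gamma> where "\<gamma> t = lim (\<lambda>k. g (sq k) t)" for t
  have lim\<gamma>: "(\<lambda>k. g (sq k) t) \<longlonglongrightarrow> \<gamma> t" for t
    unfolding \<gamma>_def using cv[of t] convergent_LIMSEQ_iff by blast
  have sqk: "real k \<le> real (sq k)" for k using seq_suble[OF sq(1)] by simp
  have evbig: "\<exists>N. \<forall>k\<ge>N. T \<le> ell * real (sq k) - D1" for T
  proof -
    obtain N :: nat where N: "(T + D1)/ell \<le> real N" using real_arch_simple by blast
    show ?thesis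
    proof (intro exI allI impI)
      fix k assume "N \<le> k"
      then have "(T + D1)/ell \<le> real (sq k)" using N sqk[of k] \<open>N \<le> k\<close> of_nat_le_iff[of N k] by linarith
      then show "T \<le> ell * real (sq k) - D1" using ell by (simp add: field_simps)
    qed
  qed
  have geo: "geodesic_line \<gamma>"
    unfolding geodesic_line_def
  proof (intro allI)
    fix u v
    have t1: "(\<lambda>k. dist (g (sq k) u) (g (sq k) v)) \<longlonglongrightarrow> dist (\<gamma> u) (\<gamma> v)"
      by (intro tendsto_dist lim\<gamma>)
    obtain N where N: "\<forall>k\<ge>N. max \<bar>u\<bar> \<bar>v\<bar> \<le> ell * real (sq k) - D1" using evbig by blast
    have "eventually (\<lambda>k. \<bar>u - v\<bar> = dist (g (sq k) u) (g (sq k) v)) sequentially"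
      unfolding eventually_sequentially using N giso by (metis max.bounded_iff)
    then have "(\<lambda>k. dist (g (sq k) u) (g (sq k) v)) \<longlonglongrightarrow> \<bar>u - v\<bar>"
      by (rule Lim_transform_eventually[OF tendsto_const])
    with t1 show "dist (\<gamma> u) (\<gamma> v) = \<bar>u - v\<bar>" by (rule LIMSEQ_unique)
  qed
  have pos: "\<exists>j\<ge>0. dist (\<gamma> t) (b j) \<le> E0 + 1" if t0: "0 \<le> t" for t
  proof -
    obtain N1 where N1: "\<forall>k\<ge>N1. dist (g (sq k) t) (\<gamma> t) < 1" using metric_LIMSEQ_D[OF lim\<gamma>[of t]] by force
    obtain N2 where N2: "\<forall>k\<ge>N2. t \<le> ell * real (sq k) - D1" using evbig by blast
    obtain j where "j\<ge>0" "dist (g (sq (max N1 N2)) t) (b j) \<le> E0"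
      using gpos[OF t0, of "sq (max N1 N2)"] N2 by auto
    moreover have "dist (\<gamma> t) (b j) \<le> dist (\<gamma> t) (g (sq (max N1 N2)) t) + dist (g (sq (max N1 N2)) t) (b j)"
      by (rule dist_triangle)
    moreover have "dist (\<gamma> t) (g (sq (max N1 N2)) t) < 1" using N1 by (simp add: dist_commute)
    ultimately show ?thesis by (intro exI[of _ j]) auto
  qed
  have neg: "\<exists>j\<le>0. dist (\<gamma> t) (b j) \<le> E0 + 1" if t0: "t \<le> 0" for t
  proof -
    obtain N1 where N1: "\<forall>k\<ge>N1. dist (g (sq k) t) (\<gamma> t) < 1" using metric_LIMSEQ_D[OF lim\<gamma>[of t]] by force
    obtain N2 where N2: "\<forall>k\<ge>N2. - t \<le> ell * real (sq k) - D1" using evbig by blast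
    obtain j where "j\<le>0" "dist (g (sq (max N1 N2)) t) (b j) \<le> E0"
      using gneg[OF t0, of "sq (max N1 N2)"] N2 by auto
    moreover have "dist (\<gamma> t) (b j) \<le> dist (\<gamma> t) (g (sq (max N1 N2)) t) + dist (g (sq (max N1 N2)) t) (b j)"
      by (rule dist_triangle)
    moreover have "dist (\<gamma> t) (g (sq (max N1 N2)) t) < 1" using N1 by (simp add: dist_commute)
    ultimately show ?thesis by (intro exI[of _ j]) auto
  qed
  show ?thesis using geo pos neg by blast
qed

lemma exists_line_ends:
  fixes b :: "int \<Rightarrow> 'a::heine_borel"
  assumes geod: "geodesic_space TYPE('a)"
    and hyp: "\<And>w x y z::'a. min (gromov_prod w x y) (gromov_prod w y z) - \<delta> \<le> gromov_prod w x z"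
    and lo: "\<And>i j. ell * \<bar>real_of_int (i - j)\<bar> \<le> dist (b i) (b j)"
    and up: "\<And>i j. dist (b i) (b j) \<le> L * \<bar>real_of_int (i - j)\<bar>"
    and dl: "4*\<delta> \<le> ell" and ell: "0 < ell"
  shows "\<exists>\<gamma>. geodesic_line \<gamma> \<and> eqv w (\<lambda>n. \<gamma> (real n)) (\<lambda>n. \<gamma> (real n)) \<and>
     eqv w (\<lambda>n. \<gamma> (- real n)) (\<lambda>n. \<gamma> (- real n)) \<and>
     eqv w (\<lambda>n. b (int n)) (\<lambda>n. \<gamma> (real n)) \<and> eqv w (\<lambda>n. b (- int n)) (\<lambda>n. \<gamma> (- real n))"
proof -
  obtain \<gamma> E where gl: "geodesic_line \<gamma>" and P: "\<forall>t\<ge>0. \<exists>j\<ge>0. dist (\<gamma> t) (b j) \<le> E"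
    and N: "\<forall>t\<le>0. \<exists>j\<le>0. dist (\<gamma> t) (b j) \<le> E"
    using exists_line[OF geod hyp lo up dl ell] by blast
  have st: "\<And>i. dist (b i) (b (i+1)) \<le> L" using up[of i "i+1" for i] by simp
  have "ell * \<bar>real_of_int (0 - 1)\<bar> \<le> dist (b 0) (b 1)" by (rule lo)
  moreover have "dist (b 0) (b 1) \<le> L * \<bar>real_of_int (0 - 1)\<bar>" by (rule up)
  ultimately have Lp: "0 < L" using ell by simp
  have "\<forall>m::nat. \<exists>j. 0 \<le> j \<and> dist (\<gamma> (real m)) (b j) \<le> E" using P by simp
  then obtain jp where jp: "\<And>m::nat. 0 \<le> jp m \<and> dist (\<gamma> (real m)) (b (jp m)) \<le> E"
    by metis
  have "\<forall>m::nat. \<exists>j. j \<le> 0 \<and> dist (\<gamma> (- real m)) (b j) \<le> E" using N by simp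
  then obtain jn where jn: "\<And>m::nat. jn m \<le> 0 \<and> dist (\<gamma> (- real m)) (b (jn m)) \<le> E"
    by metis
  have grow: "\<exists>N. \<forall>m\<ge>N. M \<le> real (nat (a m))"
    if a0: "\<And>m. 0 \<le> a m" and aK: "\<And>m::nat. real m - K \<le> L * real_of_int (a m)" for a :: "nat \<Rightarrow> int" and K M :: real
  proof -
    obtain N :: nat where N: "L * M + K \<le> real N" using real_arch_simple by blast
    show ?thesis
    proof (intro exI allI impI)
      fix m assume "N \<le> m"
      then have "L * M \<le> L * real_of_int (a m)" using N aK[of m] of_nat_le_iff[of N m] by linarith
      then have "M \<le> real_of_int (a m)" using Lp by simp
      then show "M \<le> nat (a m)" using a0[of m] by simp
    qed
  qed
  have gp: "\<exists>N. \<forall>m\<ge>N. M \<le> real (nat (jp m))" for M :: real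
  proof (rule grow)
    show "0 \<le> jp m" for m using jp by blast
    fix m :: nat
    have "real m = dist (\<gamma> (real m)) (\<gamma> 0)" using gl unfolding geodesic_line_def by simp
    also have "\<dots> \<le> dist (\<gamma> (real m)) (b (jp m)) + dist (b (jp m)) (b (jp 0)) + dist (b (jp 0)) (\<gamma> 0)"
      by (metis dist_triangle add.assoc dist_commute order_trans add_left_mono)
    also have "\<dots> \<le> E + L * \<bar>real_of_int (jp m - jp 0)\<bar> + E"
      using jp[of m] jp[of 0] up[of "jp m" "jp 0"] by (simp add: dist_commute)
    also have "\<dots> \<le> E + L * (real_of_int (jp m) + real_of_int (jp 0)) + E"
      using jp[of m] jp[of 0] Lp by (intro add_mono mult_left_mono) auto
    finally show "real m - (2*E + L * real_of_int (jp 0)) \<le> L * real_of_int (jp m)"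
      by (simp add: algebra_simps)
  qed
  have gn: "\<exists>N. \<forall>m\<ge>N. M \<le> real (nat (- jn m))" for M :: real
  proof (rule grow)
    show "0 \<le> - jn m" for m using jn[of m] by simp
    fix m :: nat
    have "real m = dist (\<gamma> (- real m)) (\<gamma> 0)" using gl unfolding geodesic_line_def by simp
    also have "\<dots> \<le> dist (\<gamma> (- real m)) (b (jn m)) + dist (b (jn m)) (b (jn 0)) + dist (b (jn 0)) (\<gamma> 0)"
      by (metis dist_triangle add.assoc dist_commute order_trans add_left_mono)
    also have "\<dots> \<le> E + L * \<bar>real_of_int (jn m - jn 0)\<bar> + E"
      using jn[of m] jn[of 0] up[of "jn m" "jn 0"] by (simp add: dist_commute)
    also have "\<dots> \<le> E + L * (real_of_int (- jn m) + real_of_int (- jn 0)) + E"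
      using jn[of m] jn[of 0] Lp by (intro add_mono mult_left_mono) auto
    finally show "real m - (2*E + L * real_of_int (- jn 0)) \<le> L * real_of_int (- jn m)"
      by (simp add: algebra_simps)
  qed
  have bp: "eqv w (\<lambda>n. b (int n)) (\<lambda>n. b (int n))"
    by (rule orbit_conv_pos[OF hyp lo st dl ell])
  have bn: "eqv w (\<lambda>n. b (- int n)) (\<lambda>n. b (- int n))"
    by (rule orbit_conv_neg[OF hyp lo st dl ell])
  have e1: "eqv w (\<lambda>n. b (int n)) (\<lambda>n. \<gamma> (real n))"
  proof (rule eqv_close2[OF bp, where c=E and \<sigma>="\<lambda>m. nat (jp m)"])
    show "dist (\<gamma> (real j)) (b (int (nat (jp j)))) \<le> E" for j using jp[of j] by simp
    show "\<exists>N. \<forall>j\<ge>N. M \<le> nat (jp j)" for M using gp[of "real M"] by auto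
  qed
  have e2: "eqv w (\<lambda>n. b (- int n)) (\<lambda>n. \<gamma> (- real n))"
  proof (rule eqv_close2[OF bn, where c=E and \<sigma>="\<lambda>m. nat (- jn m)"])
    show "dist (\<gamma> (- real j)) (b (- int (nat (- jn j)))) \<le> E" for j using jn[of j] by simp
    show "\<exists>N. \<forall>j\<ge>N. M \<le> nat (- jn j)" for M using gn[of "real M"] by auto
  qed
  have e3: "eqv w (\<lambda>n. \<gamma> (real n)) (\<lambda>n. \<gamma> (real n))"
  proof (rule eqv_close2[OF eqv_sym[OF e1], where c=E and \<sigma>="\<lambda>m. nat (jp m)"])
    show "dist (\<gamma> (real j)) (b (int (nat (jp j)))) \<le> E" for j using jp[of j] by simp
    show "\<exists>N. \<forall>j\<ge>N. M \<le> nat (jp j)" for M using gp[of "real M"] by auto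
  qed
  have e4: "eqv w (\<lambda>n. \<gamma> (- real n)) (\<lambda>n. \<gamma> (- real n))"
  proof (rule eqv_close2[OF eqv_sym[OF e2], where c=E and \<sigma>="\<lambda>m. nat (- jn m)"])
    show "dist (\<gamma> (- real j)) (b (- int (nat (- jn j)))) \<le> E" for j using jn[of j] by simp
    show "\<exists>N. \<forall>j\<ge>N. M \<le> nat (- jn j)" for M using gn[of "real M"] by auto
  qed
  show ?thesis using gl e1 e2 e3 e4 by blast
qed

lemma mult_sub:
  fixes T :: "nat \<Rightarrow> real"
  assumes sub: "\<And>m n. T (m+n) \<le> T m + T n"
  shows "T (q*m + r) \<le> real q * T m + T r"
proof (induction q)
  case 0 then show ?case by simp
next
  case (Suc q)
  have "T (Suc q * m + r) = T (m + (q*m + r))" by (simp add: add.assoc)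
  also have "\<dots> \<le> T m + T (q*m + r)" by (rule sub)
  finally show ?case using Suc by (simp add: algebra_simps)
qed

lemma fekete:
  fixes T :: "nat \<Rightarrow> real"
  assumes sub: "\<And>m n. T (m+n) \<le> T m + T n" and nn: "\<And>n. 0 \<le> T n"
  defines "c \<equiv> Inf ((\<lambda>n. T n / real n) ` {1..})"
  shows "(\<lambda>n. T n / real n) \<longlonglongrightarrow> c" and "\<And>n. 1 \<le> n \<Longrightarrow> c \<le> T n / real n"
proof -
  have bdd: "bdd_below ((\<lambda>n. T n / real n) ` {1..})"
    by (rule bdd_belowI[of _ 0]) (use nn in auto)
  show low: "c \<le> T n / real n" if "1 \<le> n" for n
    unfolding c_def by (rule cInf_lower[OF _ bdd]) (use that in auto)
  show "(\<lambda>n. T n / real n) \<longlonglongrightarrow> c"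
  proof (rule LIMSEQ_I)
    fix e :: real assume e: "0 < e"
    have "c < c + e/2" using e by simp
    then obtain m where m: "m \<in> {1..}" "T m / real m < c + e/2"
      using cInf_lessD[of "(\<lambda>n. T n / real n) ` {1..}" "c + e/2"] unfolding c_def by auto
    have m1: "1 \<le> m" using m by auto
    define B where "B = (\<Sum>r<m. T r)"
    have B: "T r \<le> B" if "r < m" for r
      unfolding B_def by (rule member_le_sum) (use that nn in auto)
    have B0: "0 \<le> B" unfolding B_def using nn by (simp add: sum_nonneg)
    obtain N :: nat where N: "2*B/e + 1 \<le> real N" using real_arch_simple by blast
    show "\<exists>no. \<forall>n\<ge>no. norm (T n / real n - c) < e"
    proof (intro exI allI impI)
      fix n assume nN: "N \<le> n"
      have npos: "0 < real n" using N nN B0 e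
        by (smt (verit) divide_nonneg_pos of_nat_0_less_iff of_nat_le_iff le_neq_implies_less of_nat_0 not_le)
      have n1: "1 \<le> n" using npos by simp
      define q where "q = n div m"
      define r where "r = n mod m"
      have nqr: "n = q*m + r" unfolding q_def r_def by simp
      have rm: "r < m" unfolding r_def using m1 by simp
      have "T n \<le> real q * T m + B" using mult_sub[OF sub, of q m r] B[OF rm] nqr by simp
      moreover have "real q * T m \<le> real n * (T m / real m)"
      proof -
        have "real q * real m \<le> real n" using nqr by (metis of_nat_le_iff of_nat_mult le_add1)
        then have "real q \<le> real n / real m" using m1 by (simp add: field_simps)
        then have "real q * T m \<le> (real n / real m) * T m" using nn[of m] by (rule mult_right_mono)
        then show ?thesis by simp
      qed
      ultimately have "T n \<le> real n * (T m / real m) + B" by linarith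
      then have "T n / real n \<le> T m / real m + B / real n" using npos by (simp add: field_simps)
      moreover have "B / real n < e/2"
      proof -
        have "2*B/e < real n" using N nN of_nat_le_iff[of N n] by linarith
        then have "2*B < e * real n" using e by (simp add: field_simps)
        then show ?thesis using npos by (simp add: field_simps)
      qed
      moreover have "c \<le> T n / real n" by (rule low[OF n1])
      ultimately have "T n / real n - c < e" "0 \<le> T n / real n - c" using m(2) by linarith+
      then show "norm (T n / real n - c) < e" by simp
    qed
  qed
qed

locale act =
  fixes Gm :: "('g, 'b) monoid_scheme" (structure)
    and phi :: "'g \<Rightarrow> 'a::heine_borel \<Rightarrow> 'a" and bp :: 'a and \<delta> :: real
  assumes ia: "isom_action Gm phi"
    and hyp: "\<And>w x y z::'a. min (gromov_prod w x y) (gromov_prod w y z) - \<delta> \<le> gromov_prod w x z"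
    and geod: "geodesic_space TYPE('a)"
begin
lemma grp: "group Gm" using ia unfolding isom_action_def by auto
end

sublocale act \<subseteq> group Gm by (rule grp)

context act begin

lemma d0: "0 \<le> \<delta>" by (rule hyp_delta_nonneg[OF hyp])

lemma iso: "g \<in> carrier Gm \<Longrightarrow> dist (phi g x) (phi g y) = dist x y"
  using ia unfolding isom_action_def isometry_def by auto

lemma comp: "g \<in> carrier Gm \<Longrightarrow> h \<in> carrier Gm \<Longrightarrow> phi (g \<otimes> h) x = phi g (phi h x)"
  using ia unfolding isom_action_def by auto

lemma one: "phi \<one> x = x"
  using ia unfolding isom_action_def by auto

lemma invl: assumes g: "g \<in> carrier Gm" shows "phi (inv g) (phi g x) = x"
  using comp[OF inv_closed[OF g] g, of x] l_inv[OF g] one[of x] by simp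

lemma invr: assumes g: "g \<in> carrier Gm" shows "phi g (phi (inv g) x) = x"
  using comp[OF g inv_closed[OF g], of x] r_inv[OF g] one[of x] by simp

definition T where "T g n = dist bp (phi (g [^] (n::nat)) bp)"

lemma T_nn: "0 \<le> T g n" unfolding T_def by simp

lemma T_sub: assumes g: "g \<in> carrier Gm" shows "T g (m+n) \<le> T g m + T g n"
proof -
  have "phi (g [^] (m+n)) bp = phi (g [^] m) (phi (g [^] n) bp)"
    using nat_pow_mult[OF g, of m n] comp[OF nat_pow_closed[OF g] nat_pow_closed[OF g], of m n bp] by simp
  moreover have "dist bp (phi (g [^] m) (phi (g [^] n) bp)) \<le> dist bp (phi (g [^] m) bp) + dist (phi (g [^] m) bp) (phi (g [^] m) (phi (g [^] n) bp))"
    by (rule dist_triangle)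
  moreover have "dist (phi (g [^] m) bp) (phi (g [^] m) (phi (g [^] n) bp)) = T g n"
    unfolding T_def using iso g by simp
  ultimately show ?thesis unfolding T_def by simp
qed

lemma T_le: assumes g: "g \<in> carrier Gm" shows "T g n \<le> real n * T g 1"
proof (induction n)
  case 0 then show ?case by (simp add: T_def one)
next
  case (Suc n)
  have "T g (n + 1) \<le> T g n + T g 1" by (rule T_sub[OF g])
  then show ?case using Suc by (simp add: algebra_simps)
qed

definition orb where "orb g i = phi (g [^] (i::int)) bp"

lemma orb_dist: assumes g: "g \<in> carrier Gm"
  shows "dist (orb g i) (orb g j) = T g (nat \<bar>j - i\<bar>)"
proof -
  have "g [^] j = g [^] i \<otimes> g [^] (j - i)" using int_pow_mult[OF g, of i "j - i"] by simp
  then have "orb g j = phi (g [^] i) (phi (g [^] (j - i)) bp)" unfolding orb_def using comp g by simp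
  then have e: "dist (orb g i) (orb g j) = dist bp (phi (g [^] (j - i)) bp)" unfolding orb_def using iso g by simp
  show ?thesis
  proof (cases "0 \<le> j - i")
    case True
    then have "g [^] (j - i) = g [^] (nat (j - i))" using pow_nat[of "j - i" Gm g] by simp
    then show ?thesis using e True unfolding T_def by simp
  next
    case False
    have "g [^] (j - i) = inv (g [^] (i - j))" using int_pow_neg[OF g, of "i - j"] by simp
    also have "\<dots> = inv (g [^] (nat (i - j)))" using pow_nat[of "i - j" Gm g] False by simp
    finally have gi: "g [^] (j - i) = inv (g [^] (nat (i - j)))" .
    have "dist bp (phi (inv (g [^] (nat (i - j)))) bp) = dist (phi (g [^] (nat (i - j))) bp) (phi (g [^] (nat (i - j))) (phi (inv (g [^] (nat (i - j)))) bp))"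
      using iso g by simp
    also have "\<dots> = dist (phi (g [^] (nat (i - j))) bp) bp" using invr g by simp
    finally show ?thesis using e gi False unfolding T_def by (simp add: dist_commute)
  qed
qed

lemma orb_up: assumes g: "g \<in> carrier Gm"
  shows "dist (orb g i) (orb g j) \<le> T g 1 * \<bar>real_of_int (i - j)\<bar>"
  using orb_dist[OF g, of i j] T_le[OF g, of "nat \<bar>j - i\<bar>"] by (simp add: mult.commute abs_minus_commute)

lemma lox_lim:
  assumes "loxodromic bp Gm phi g"
  shows "\<exists>ell>0. (\<lambda>n. T g n / real n) \<longlonglongrightarrow> ell \<and> (\<forall>n. ell * real n \<le> T g n)"
proof -
  have g: "g \<in> carrier Gm" and l: "0 < lim (\<lambda>n. T g n / real n)"
    using assms unfolding loxodromic_def T_def by auto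
  define c where "c = Inf ((\<lambda>n. T g n / real n) ` {1..})"
  have t: "(\<lambda>n. T g n / real n) \<longlonglongrightarrow> c" and lo: "\<And>n. 1 \<le> n \<Longrightarrow> c \<le> T g n / real n"
    unfolding c_def by (rule fekete[OF T_sub[OF g] T_nn])+
  have "lim (\<lambda>n. T g n / real n) = c" using t by (rule limI)
  then have c0: "0 < c" using l by simp
  have "c * real n \<le> T g n" for n
  proof (cases "n = 0")
    case True then show ?thesis using T_nn by simp
  next
    case False then show ?thesis using lo[of n] by (simp add: field_simps)
  qed
  then show ?thesis using c0 t by blast
qed

lemma orbit_pkg:
  assumes lox: "loxodromic bp Gm phi g"
  shows "\<exists>N::nat. \<exists>ell L. 1 \<le> N \<and> 4*\<delta> \<le> ell \<and> 0 < ell \<and>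
    (\<forall>i j. ell * \<bar>real_of_int (i - j)\<bar> \<le> dist (orb g (int N * i)) (orb g (int N * j))) \<and>
    (\<forall>i j. dist (orb g (int N * i)) (orb g (int N * j)) \<le> L * \<bar>real_of_int (i - j)\<bar>)"
proof -
  have g: "g \<in> carrier Gm" using lox unfolding loxodromic_def by auto
  obtain l where l: "0 < l" "\<And>n. l * real n \<le> T g n" using lox_lim[OF lox] by blast
  define N where "N = nat \<lceil>4*\<delta>/l\<rceil> + 1"
  have N1: "1 \<le> N" unfolding N_def by simp
  have "4*\<delta>/l \<le> real N" unfolding N_def by linarith
  then have dl: "4*\<delta> \<le> l * real N" using l(1) by (simp add: field_simps)
  have dN: "dist (orb g (int N * i)) (orb g (int N * j)) = T g (N * nat \<bar>i - j\<bar>)" for i j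
  proof -
    have "int N * j - int N * i = int N * (j - i)" by (simp add: right_diff_distrib)
    then have "\<bar>int N * j - int N * i\<bar> = int N * \<bar>i - j\<bar>" by (simp add: abs_mult abs_minus_commute)
    then have "nat \<bar>int N * j - int N * i\<bar> = N * nat \<bar>i - j\<bar>" by (simp add: nat_mult_distrib)
    then show ?thesis using orb_dist[OF g] by simp
  qed
  show ?thesis
  proof (intro exI conjI allI)
    show "1 \<le> N" by (rule N1)
    show "4*\<delta> \<le> l * real N" by (rule dl)
    show "0 < l * real N" using l(1) N1 by simp
    fix i j
    show "l * real N * \<bar>real_of_int (i - j)\<bar> \<le> dist (orb g (int N * i)) (orb g (int N * j))"
      using l(2)[of "N * nat \<bar>i - j\<bar>"] dN[of i j] by (simp add: mult.assoc)
    show "dist (orb g (int N * i)) (orb g (int N * j)) \<le> (real N * T g 1) * \<bar>real_of_int (i - j)\<bar>"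
      using T_le[OF g, of "N * nat \<bar>i - j\<bar>"] dN[of i j] by (simp add: algebra_simps)
  qed
qed

lemma fix_eq:
  assumes g: "g \<in> carrier Gm"
  shows "fix_plus bp Gm phi g = bdry_pt bp (\<lambda>n. orb g (int n))"
    and "fix_minus bp Gm phi g = bdry_pt bp (\<lambda>n. orb g (- int n))"
proof -
  show "fix_plus bp Gm phi g = bdry_pt bp (\<lambda>n. orb g (int n))"
    unfolding fix_plus_def orb_def by (simp add: int_pow_int)
  have "inv g [^] n = g [^] (- int n)" for n :: nat
    using nat_pow_inv[OF g, of n] int_pow_neg_int[OF g, of n] by simp
  then show "fix_minus bp Gm phi g = bdry_pt bp (\<lambda>n. orb g (- int n))"
    unfolding fix_minus_def orb_def by simp
qed

lemma orb_sub_eqv: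
  assumes g: "g \<in> carrier Gm" and N1: "1 \<le> N" and e: "e = 1 \<or> e = -1"
    and bb: "eqv w (\<lambda>n. orb g (int N * (e * int n))) (\<lambda>n. orb g (int N * (e * int n)))"
  shows "eqv w (\<lambda>n. orb g (int N * (e * int n))) (\<lambda>n. orb g (e * int n))"
proof (rule eqv_close2[OF bb, where c="T g 1 * real N" and \<sigma>="\<lambda>n. n div N"])
  fix j :: nat
  have "dist (orb g (e * int j)) (orb g (int N * (e * int (j div N)))) \<le> T g 1 * \<bar>real_of_int (e * int j - int N * (e * int (j div N)))\<bar>"
    by (rule orb_up[OF g])
  also have "\<bar>real_of_int (e * int j - int N * (e * int (j div N)))\<bar> = real (j mod N)"
  proof -
    have jj: "int j = int N * int (j div N) + int (j mod N)"
    proof -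
      have "j = N * (j div N) + j mod N" by simp
      then have "int j = int (N * (j div N) + j mod N)" by (rule arg_cong)
      then show ?thesis by (simp only: of_nat_add of_nat_mult)
    qed
    have "e * int j - int N * (e * int (j div N)) = e * int (j mod N)"
      unfolding jj by (simp add: algebra_simps)
    then show ?thesis using e by auto
  qed
  also have "T g 1 * real (j mod N) \<le> T g 1 * real N"
    using T_nn[of g 1] N1 by (intro mult_left_mono) (auto simp: less_imp_le)
  finally show "dist (orb g (e * int j)) (orb g (int N * (e * int (j div N)))) \<le> T g 1 * real N" .
next
  fix M :: nat
  show "\<exists>K. \<forall>j\<ge>K. M \<le> j div N"
  proof (intro exI allI impI)
    fix j assume "M * N \<le> j"
    then have "(M * N) div N \<le> j div N" by (rule div_le_mono)
    then show "M \<le> j div N" using N1 by simp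
  qed
qed

end

context act begin

lemma cancel_l: "a \<in> carrier Gm \<Longrightarrow> k \<in> carrier Gm \<Longrightarrow> inv k \<otimes> (k \<otimes> a) = a"
  by (simp add: m_assoc[symmetric])

lemma conj_hom: assumes k: "k \<in> carrier Gm" shows "(\<lambda>x. k \<otimes> x \<otimes> inv k) \<in> hom Gm Gm"
  unfolding hom_def using k by (auto simp: m_assoc cancel_l)

lemma conj_pow: assumes k: "k \<in> carrier Gm" and p: "p \<in> carrier Gm"
  shows "(k \<otimes> p \<otimes> inv k) [^] (i::int) = k \<otimes> p [^] i \<otimes> inv k"
  using hom_int_pow[OF conj_hom[OF k] p grp grp] by simp

lemma conj_orb: assumes k: "k \<in> carrier Gm" and p: "p \<in> carrier Gm"
  shows "phi (inv k) (orb (k \<otimes> p \<otimes> inv k) i) = phi (p [^] i) (phi (inv k) bp)"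
proof -
  have "orb (k \<otimes> p \<otimes> inv k) i = phi k (phi (p [^] i) (phi (inv k) bp))"
    unfolding orb_def conj_pow[OF k p] using k p by (simp add: comp)
  then show ?thesis using invl k by simp
qed

lemma lox_conj:
  assumes k: "k \<in> carrier Gm" and lox: "loxodromic bp Gm phi p"
  shows "loxodromic bp Gm phi (k \<otimes> p \<otimes> inv k)"
proof -
  have p: "p \<in> carrier Gm" using lox unfolding loxodromic_def by auto
  define h where "h = k \<otimes> p \<otimes> inv k"
  have h: "h \<in> carrier Gm" unfolding h_def using k p by simp
  obtain l where l: "0 < l" "(\<lambda>n. T p n / real n) \<longlonglongrightarrow> l" using lox_lim[OF lox] by blast
  define u where "u = phi (inv k) bp"
  have Th: "T h n = dist u (phi (p [^] n) u)" for n
  proof -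
    have "T h n = dist (phi (inv k) bp) (phi (inv k) (orb h (int n)))"
      unfolding T_def orb_def using iso k by (simp add: int_pow_int)
    also have "\<dots> = dist u (phi (p [^] n) u)"
      unfolding h_def u_def conj_orb[OF k p] by (simp add: int_pow_int)
    finally show ?thesis .
  qed
  have diff: "\<bar>T h n - T p n\<bar> \<le> 2 * dist u bp" for n
  proof -
    have e: "dist (phi (p [^] n) u) (phi (p [^] n) bp) = dist u bp" using iso p by simp
    have "dist u (phi (p [^] n) u) \<le> dist u bp + dist bp (phi (p [^] n) bp) + dist (phi (p [^] n) bp) (phi (p [^] n) u)"
      by (metis dist_triangle add_right_mono order_trans)
    moreover have "dist bp (phi (p [^] n) bp) \<le> dist bp u + dist u (phi (p [^] n) u) + dist (phi (p [^] n) u) (phi (p [^] n) bp)"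
      by (metis dist_triangle add_right_mono order_trans)
    moreover have "T p n = dist bp (phi (p [^] n) bp)" unfolding T_def ..
    ultimately show ?thesis using Th[of n] e dist_commute[of u bp]
        dist_commute[of "phi (p [^] n) bp" "phi (p [^] n) u"] unfolding abs_le_iff by linarith
  qed
  have z: "(\<lambda>n. (T h n - T p n) / real n) \<longlonglongrightarrow> 0"
  proof (rule Lim_null_comparison)
    show "(\<lambda>n. 2 * dist u bp / real n) \<longlonglongrightarrow> 0" by (rule lim_const_over_n)
    show "\<forall>\<^sub>F n in sequentially. norm ((T h n - T p n) / real n) \<le> 2 * dist u bp / real n"
      by (rule always_eventually) (use diff in \<open>auto simp: abs_divide intro: divide_right_mono\<close>)
  qed
  have "(\<lambda>n. T p n / real n + (T h n - T p n) / real n) \<longlonglongrightarrow> l + 0"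
    by (rule tendsto_add[OF l(2) z])
  then have "(\<lambda>n. T h n / real n) \<longlonglongrightarrow> l" by (simp add: diff_divide_distrib)
  then have "lim (\<lambda>n. T h n / real n) = l" by (rule limI)
  then show ?thesis unfolding loxodromic_def h_def[symmetric] using h l(1) unfolding T_def by simp
qed

lemma Ax_ne:
  assumes lox: "loxodromic bp Gm phi g"
  shows "Ax bp Gm phi g \<noteq> {}"
proof -
  have g: "g \<in> carrier Gm" using lox unfolding loxodromic_def by auto
  obtain N ell L where N1: "1 \<le> N" and dl: "4*\<delta> \<le> ell" and ell: "0 < ell"
    and lo: "\<And>i j. ell * \<bar>real_of_int (i - j)\<bar> \<le> dist (orb g (int N * i)) (orb g (int N * j))"
    and up: "\<And>i j. dist (orb g (int N * i)) (orb g (int N * j)) \<le> L * \<bar>real_of_int (i - j)\<bar>"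
    using orbit_pkg[OF lox] by blast
  define b where "b i = orb g (int N * i)" for i
  have lo': "\<And>i j. ell * \<bar>real_of_int (i - j)\<bar> \<le> dist (b i) (b j)" using lo unfolding b_def .
  have up': "\<And>i j. dist (b i) (b j) \<le> L * \<bar>real_of_int (i - j)\<bar>" using up unfolding b_def .
  have st: "\<And>i. dist (b i) (b (i+1)) \<le> L" using up'[of i "i+1" for i] by simp
  obtain \<gamma> where gl: "geodesic_line \<gamma>" and c1: "eqv bp (\<lambda>n. \<gamma> (real n)) (\<lambda>n. \<gamma> (real n))"
    and c2: "eqv bp (\<lambda>n. \<gamma> (- real n)) (\<lambda>n. \<gamma> (- real n))"
    and c3: "eqv bp (\<lambda>n. b (int n)) (\<lambda>n. \<gamma> (real n))" and c4: "eqv bp (\<lambda>n. b (- int n)) (\<lambda>n. \<gamma> (- real n))"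
    using exists_line_ends[OF geod hyp lo' up' dl ell, of bp] by blast
  have bp1: "eqv bp (\<lambda>n. b (int n)) (\<lambda>n. b (int n))" by (rule orbit_conv_pos[OF hyp lo' st dl ell])
  have bn1: "eqv bp (\<lambda>n. b (- int n)) (\<lambda>n. b (- int n))" by (rule orbit_conv_neg[OF hyp lo' st dl ell])
  have ab1: "eqv bp (\<lambda>n. b (int n)) (\<lambda>n. orb g (int n))"
    using orb_sub_eqv[OF g N1, of 1 bp] bp1 unfolding b_def by simp
  have ab2: "eqv bp (\<lambda>n. b (- int n)) (\<lambda>n. orb g (- int n))"
    using orb_sub_eqv[OF g N1, of "-1" bp] bn1 unfolding b_def by simp
  have aa1: "eqv bp (\<lambda>n. orb g (int n)) (\<lambda>n. orb g (int n))"
    using orb_sub_eqv[OF g N1, of 1 bp] eqv_sym[OF ab1] unfolding b_def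
    by (metis (no_types) ab1 eqv_sym eqv_trans[OF hyp])
  have aa2: "eqv bp (\<lambda>n. orb g (- int n)) (\<lambda>n. orb g (- int n))"
    by (metis (no_types) ab2 eqv_sym eqv_trans[OF hyp])
  have s1: "seq_equiv bp (\<lambda>n. orb g (int n)) (\<lambda>n. \<gamma> (real n))"
    unfolding seq_equiv_eqv using aa1 c1 eqv_trans[OF hyp eqv_sym[OF ab1] c3] by blast
  have s2: "seq_equiv bp (\<lambda>n. orb g (- int n)) (\<lambda>n. \<gamma> (- real n))"
    unfolding seq_equiv_eqv using aa2 c2 eqv_trans[OF hyp eqv_sym[OF ab2] c4] by blast
  have "{bdry_pt bp (\<lambda>n. \<gamma> (real n)), bdry_pt bp (\<lambda>n. \<gamma> (- real n))} = {fix_plus bp Gm phi g, fix_minus bp Gm phi g}"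
    unfolding fix_eq[OF g] bdry_eq[OF hyp s1] bdry_eq[OF hyp s2] ..
  moreover have "conv_inf bp (\<lambda>n. \<gamma> (real n))" "conv_inf bp (\<lambda>n. \<gamma> (- real n))"
    using c1 c2 conv_inf_eqv by auto
  ultimately have "range \<gamma> \<subseteq> Ax bp Gm phi g" unfolding Ax_def using gl by blast
  then show ?thesis by blast
qed

lemma eqv_isom:
  assumes "eqv w x y" and g: "g \<in> carrier Gm"
  shows "eqv (phi g w) (\<lambda>n. phi g (x n)) (\<lambda>n. phi g (y n))"
  using assms(1) unfolding eqv_def using gp_isom[of "phi g", OF iso[OF g]] by simp

lemma near_conj:
  assumes lox: "loxodromic bp Gm phi p"
  shows "\<exists>D. \<forall>k\<in>carrier Gm. \<forall>w\<in>Ax bp Gm phi (k \<otimes> p \<otimes> inv k). \<exists>i. dist (phi (inv k) w) (orb p i) \<le> D"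
proof -
  have p: "p \<in> carrier Gm" using lox unfolding loxodromic_def by auto
  obtain N ell L where N1: "1 \<le> N" and dl: "4*\<delta> \<le> ell" and ell: "0 < ell"
    and lo: "\<And>i j. ell * \<bar>real_of_int (i - j)\<bar> \<le> dist (orb p (int N * i)) (orb p (int N * j))"
    and up: "\<And>i j. dist (orb p (int N * i)) (orb p (int N * j)) \<le> L * \<bar>real_of_int (i - j)\<bar>"
    using orbit_pkg[OF lox] by blast
  define b where "b i = orb p (int N * i)" for i
  have lo': "\<And>i j. ell * \<bar>real_of_int (i - j)\<bar> \<le> dist (b i) (b j)" using lo unfolding b_def .
  have up': "\<And>i j. dist (b i) (b j) \<le> L * \<bar>real_of_int (i - j)\<bar>" using up unfolding b_def .
  have st: "\<And>i. dist (b i) (b (i+1)) \<le> L" using up'[of i "i+1" for i] by simp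
  show ?thesis
  proof (rule exI[of _ "2*(2*\<delta> + L + 2*\<delta>)"], intro ballI)
    fix k w assume k: "k \<in> carrier Gm" and w: "w \<in> Ax bp Gm phi (k \<otimes> p \<otimes> inv k)"
    define h where "h = k \<otimes> p \<otimes> inv k"
    have h: "h \<in> carrier Gm" unfolding h_def using k p by simp
    define psi where "psi = phi (inv k)"
    define u where "u = psi bp"
    obtain lam s where gl: "geodesic_line lam" and ws: "w = lam s"
      and cv: "conv_inf bp (\<lambda>n. lam (real n))" "conv_inf bp (\<lambda>n. lam (- real n))"
      and ends: "{bdry_pt bp (\<lambda>n. lam (real n)), bdry_pt bp (\<lambda>n. lam (- real n))} = {fix_plus bp Gm phi h, fix_minus bp Gm phi h}"
      using w unfolding Ax_def h_def by blast
    have gl': "geodesic_line (\<lambda>t. psi (lam t))"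
      using gl iso[OF inv_closed[OF k]] unfolding geodesic_line_def psi_def by simp
    have tr: "eqv u (\<lambda>n. psi (\<mu> n)) (\<lambda>n. b (e * int n))"
      if mu: "\<mu> \<in> bdry_pt bp (\<lambda>n. orb h (e * int n))" and e: "e = 1 \<or> e = -1" for \<mu> e
    proof -
      have "seq_equiv bp (\<lambda>n. orb h (e * int n)) \<mu>" using mu by (rule in_bdry_seq_equiv)
      then have "eqv bp \<mu> (\<lambda>n. orb h (e * int n))" unfolding seq_equiv_eqv using eqv_sym by blast
      then have "eqv u (\<lambda>n. psi (\<mu> n)) (\<lambda>n. psi (orb h (e * int n)))"
        unfolding u_def psi_def by (rule eqv_isom[OF _ inv_closed[OF k]])
      then have e1: "eqv u (\<lambda>n. psi (\<mu> n)) (\<lambda>n. phi (p [^] (e * int n)) u)"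
        unfolding psi_def u_def h_def conj_orb[OF k p] .
      have e2: "eqv u (\<lambda>n. psi (\<mu> n)) (\<lambda>n. orb p (e * int n))"
      proof (rule eqv_close2[OF e1, where c="dist u bp" and \<sigma>=id])
        show "dist (orb p (e * int j)) (phi (p [^] (e * int (id j))) u) \<le> dist u bp" for j
          unfolding orb_def using iso p by (simp add: dist_commute)
        show "\<exists>N. \<forall>j\<ge>N. M \<le> id j" for M by auto
      qed
      show ?thesis
      proof (rule eqv_close2[OF e2, where c=0 and \<sigma>="\<lambda>j. N * j"])
        show "dist (b (e * int j)) (orb p (e * int (N * j))) \<le> 0" for j
          unfolding b_def by (simp add: algebra_simps)
        show "\<exists>K. \<forall>j\<ge>K. M \<le> N * j" for M
          by (rule exI[of _ M]) (use N1 in \<open>auto intro: order_trans[OF _ mult_le_mono1[of 1 N]]\<close>)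
      qed
    qed
    have inb: "\<mu> \<in> bdry_pt bp \<mu>" if "conv_inf bp \<mu>" for \<mu> using that by (rule in_bdry)
    have fxs: "fix_plus bp Gm phi h = bdry_pt bp (\<lambda>n. orb h (1 * int n))"
         "fix_minus bp Gm phi h = bdry_pt bp (\<lambda>n. orb h ((-1) * int n))"
      using fix_eq[OF h] by simp_all
    have "(eqv u (\<lambda>n. psi (lam (real n))) (\<lambda>n. b (int n)) \<and> eqv u (\<lambda>n. psi (lam (- real n))) (\<lambda>n. b (- int n))) \<or>
          (eqv u (\<lambda>n. psi (lam (real n))) (\<lambda>n. b (- int n)) \<and> eqv u (\<lambda>n. psi (lam (- real n))) (\<lambda>n. b (int n)))"
      using ends unfolding doubleton_eq_iff
    proof
      assume a: "bdry_pt bp (\<lambda>n. lam (real n)) = fix_plus bp Gm phi h \<and> bdry_pt bp (\<lambda>n. lam (- real n)) = fix_minus bp Gm phi h"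
      show ?thesis
        using tr[of "\<lambda>n. lam (real n)" 1] tr[of "\<lambda>n. lam (- real n)" "-1"] a inb[OF cv(1)] inb[OF cv(2)]
        unfolding fxs by auto
    next
      assume a: "bdry_pt bp (\<lambda>n. lam (real n)) = fix_minus bp Gm phi h \<and> bdry_pt bp (\<lambda>n. lam (- real n)) = fix_plus bp Gm phi h"
      show ?thesis
        using tr[of "\<lambda>n. lam (real n)" "-1"] tr[of "\<lambda>n. lam (- real n)" 1] a inb[OF cv(1)] inb[OF cv(2)]
        unfolding fxs by auto
    qed
    then obtain i where "dist (psi (lam s)) (b i) \<le> 2*(2*\<delta> + L + 2*\<delta>)"
      using line_near_orbit[OF hyp lo' st dl gl', of u s] by blast
    then show "\<exists>i. dist (phi (inv k) w) (orb p i) \<le> 2*(2*\<delta> + L + 2*\<delta>)"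
      unfolding psi_def ws b_def by blast
  qed
qed

end

lemma (in group) subgroup_int_pow_closed':
  assumes "subgroup H G" "h \<in> H" shows "h [^] (k :: int) \<in> H"
  using group.int_pow_closed[OF subgroup_imp_group[OF assms(1)]] assms(2)
  unfolding int_pow_consistent[OF assms] by simp

theorem lemma5p7:
  fixes Gm :: "('g, 'b) monoid_scheme"
    and \<phi> :: "'g \<Rightarrow> 'a::heine_borel \<Rightarrow> 'a"
    and G P :: "'g set"
    and bp :: 'a
  assumes "geodesic_space TYPE('a)"
    and "gromov_hyperbolic TYPE('a)"
    and "isom_action Gm \<phi>"
    and "proper_action Gm \<phi>"
    and "non_elementary bp Gm \<phi>"
    and "subgroup G Gm"
    and "infinite G"
    and "infinite (rcosets\<^bsub>Gm\<^esub> G)"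
    and "confined Gm G P"
    and "\<forall>p \<in> P - {\<one>\<^bsub>Gm\<^esub>}. loxodromic bp Gm \<phi> p"
  shows "\<exists>h :: nat \<Rightarrow> 'g. inj h \<and> (\<forall>n. h n \<in> G \<and> loxodromic bp Gm \<phi> (h n)) \<and>
           filterlim (\<lambda>n. infdist bp (AxG bp Gm \<phi> G (h n))) at_top sequentially"
proof -
  obtain \<delta> where hypd: "\<And>w x y z::'a. min (gromov_prod w x y) (gromov_prod w y z) - \<delta> \<le> gromov_prod w x z"
    using assms(2) unfolding gromov_hyperbolic_def by blast
  interpret A: act Gm \<phi> bp \<delta>
    by unfold_locales (use assms(3) assms(1) hypd in auto)
  have Gs: "subgroup G Gm" by (rule assms(6))
  have GC: "G \<subseteq> carrier Gm" using Gs by (rule subgroup.subset)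
  have conf: "finite P" "P \<subseteq> carrier Gm"
    "\<And>g. g \<in> carrier Gm \<Longrightarrow> {g \<otimes>\<^bsub>Gm\<^esub> h \<otimes>\<^bsub>Gm\<^esub> inv\<^bsub>Gm\<^esub> g | h. h \<in> G} \<inter> (P - {\<one>\<^bsub>Gm\<^esub>}) \<noteq> {}"
    using assms(9) unfolding confined_def by auto
  define P' where "P' = P - {\<one>\<^bsub>Gm\<^esub>}"
  have finP': "finite P'" unfolding P'_def using conf(1) by simp
  have "\<forall>p\<in>P'. \<exists>D. \<forall>k\<in>carrier Gm. \<forall>w\<in>Ax bp Gm \<phi> (k \<otimes>\<^bsub>Gm\<^esub> p \<otimes>\<^bsub>Gm\<^esub> inv\<^bsub>Gm\<^esub> k). \<exists>i. dist (\<phi> (inv\<^bsub>Gm\<^esub> k) w) (A.orb p i) \<le> D"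
    using A.near_conj assms(10) unfolding P'_def by blast
  then obtain Df where Df: "\<And>p k w. p \<in> P' \<Longrightarrow> k\<in>carrier Gm \<Longrightarrow> w\<in>Ax bp Gm \<phi> (k \<otimes>\<^bsub>Gm\<^esub> p \<otimes>\<^bsub>Gm\<^esub> inv\<^bsub>Gm\<^esub> k) \<Longrightarrow>
      \<exists>i. dist (\<phi> (inv\<^bsub>Gm\<^esub> k) w) (A.orb p i) \<le> Df p"
    by metis
  define D where "D = Max (insert 0 (Df ` P'))"
  have DfD: "Df p \<le> D" if "p \<in> P'" for p
    unfolding D_def using finP' that by (intro Max_ge) auto
  have far: "\<exists>h\<in>G. loxodromic bp Gm \<phi> h \<and> R < infdist bp (AxG bp Gm \<phi> G h)" for R
  proof -
    define R' where "R' = R + 1 + D"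
    define F where "F = {g\<in>carrier Gm. dist (\<phi> g bp) bp \<le> R'}"
    have finF: "finite F" using assms(4) unfolding proper_action_def F_def by blast
    have "finite ((\<lambda>g. G #>\<^bsub>Gm\<^esub> g) ` F)" using finF by simp
    then obtain C where C: "C \<in> rcosets\<^bsub>Gm\<^esub> G" "C \<notin> (\<lambda>g. G #>\<^bsub>Gm\<^esub> g) ` F"
      using assms(8) by (meson finite_subset subsetI)
    then obtain k where k: "k \<in> carrier Gm" and Ck: "C = G #>\<^bsub>Gm\<^esub> k"
      unfolding RCOSETS_def by blast
    have ik: "inv\<^bsub>Gm\<^esub> k \<in> carrier Gm" using k by simp
    obtain h0 where h0: "h0 \<in> G" and pP: "inv\<^bsub>Gm\<^esub> k \<otimes>\<^bsub>Gm\<^esub> h0 \<otimes>\<^bsub>Gm\<^esub> inv\<^bsub>Gm\<^esub> (inv\<^bsub>Gm\<^esub> k) \<in> P'"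
      using conf(3)[OF ik] unfolding P'_def by blast
    define p where "p = inv\<^bsub>Gm\<^esub> k \<otimes>\<^bsub>Gm\<^esub> h0 \<otimes>\<^bsub>Gm\<^esub> inv\<^bsub>Gm\<^esub> (inv\<^bsub>Gm\<^esub> k)"
    have h0C: "h0 \<in> carrier Gm" using h0 GC by auto
    have pC: "p \<in> carrier Gm" unfolding p_def using h0C k by simp
    have h0eq: "h0 = k \<otimes>\<^bsub>Gm\<^esub> p \<otimes>\<^bsub>Gm\<^esub> inv\<^bsub>Gm\<^esub> k"
      unfolding p_def using k h0C by (simp add: A.m_assoc A.cancel_l) (simp add: A.m_assoc[symmetric])
    have loxp: "loxodromic bp Gm \<phi> p" using assms(10) pP unfolding p_def P'_def by blast
    have loxh: "loxodromic bp Gm \<phi> h0" unfolding h0eq by (rule A.lox_conj[OF k loxp])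
    have Axne: "Ax bp Gm \<phi> h0 \<noteq> {}" by (rule A.Ax_ne[OF loxh])
    have one: "\<one>\<^bsub>Gm\<^esub> \<in> G" using Gs by (rule subgroup.one_closed)
    have AxGne: "AxG bp Gm \<phi> G h0 \<noteq> {}" unfolding AxG_def using Axne one A.one by auto
    have bound: "R + 1 \<le> dist bp z" if z: "z \<in> AxG bp Gm \<phi> G h0" for z
    proof -
      obtain f w where f: "f \<in> G" and w: "w \<in> Ax bp Gm \<phi> h0" and zf: "z = \<phi> f w"
        using z unfolding AxG_def by blast
      have fC: "f \<in> carrier Gm" using f GC by auto
      obtain i where i: "dist (\<phi> (inv\<^bsub>Gm\<^esub> k) w) (A.orb p i) \<le> Df p"
        using Df[OF pP[folded p_def] k] w unfolding h0eq by blast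
      define g' where "g' = f \<otimes>\<^bsub>Gm\<^esub> k \<otimes>\<^bsub>Gm\<^esub> p [^]\<^bsub>Gm\<^esub> i"
      have g'C: "g' \<in> carrier Gm" unfolding g'_def using fC k pC by simp
      have "g' = (f \<otimes>\<^bsub>Gm\<^esub> h0 [^]\<^bsub>Gm\<^esub> i) \<otimes>\<^bsub>Gm\<^esub> k"
        unfolding g'_def h0eq A.conj_pow[OF k pC] using fC k pC by (simp add: A.m_assoc)
      moreover have "f \<otimes>\<^bsub>Gm\<^esub> h0 [^]\<^bsub>Gm\<^esub> i \<in> G"
        using f A.subgroup_int_pow_closed'[OF Gs h0] Gs by (simp add: subgroup.m_closed)
      ultimately have g'in: "g' \<in> G #>\<^bsub>Gm\<^esub> k" unfolding r_coset_def by blast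
      have "g' \<notin> F"
      proof
        assume "g' \<in> F"
        moreover have "G #>\<^bsub>Gm\<^esub> g' = G #>\<^bsub>Gm\<^esub> k" using A.repr_independence[OF g'in k Gs] by simp
        ultimately show False using C Ck by auto
      qed
      then have far': "R' < dist (\<phi> g' bp) bp" unfolding F_def using g'C by auto
      have "z = \<phi> (f \<otimes>\<^bsub>Gm\<^esub> k) (\<phi> (inv\<^bsub>Gm\<^esub> k) w)" unfolding zf using fC k by (simp add: A.comp A.invr)
      moreover have "\<phi> g' bp = \<phi> (f \<otimes>\<^bsub>Gm\<^esub> k) (A.orb p i)" unfolding g'_def A.orb_def using fC k pC by (simp add: A.comp)
      ultimately have "dist z (\<phi> g' bp) = dist (\<phi> (inv\<^bsub>Gm\<^esub> k) w) (A.orb p i)" using A.iso fC k by simp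
      then have "dist z (\<phi> g' bp) \<le> D" using i DfD[OF pP[folded p_def]] by linarith
      then show ?thesis using far' dist_triangle[of "\<phi> g' bp" bp z] unfolding R'_def by (simp add: dist_commute)
    qed
    have "R + 1 \<le> infdist bp (AxG bp Gm \<phi> G h0)"
      unfolding infdist_notempty[OF AxGne] by (rule cINF_greatest[OF AxGne bound])
    then show ?thesis using h0 loxh by (intro bexI[of _ h0]) auto
  qed
  define I where "I h = infdist bp (AxG bp Gm \<phi> G h)" for h
  have "\<exists>f. \<forall>n. (f n \<in> G \<and> loxodromic bp Gm \<phi> (f n) \<and> real n \<le> I (f n)) \<and> I (f n) < I (f (Suc n))"
  proof (rule dependent_nat_choice)
    show "\<exists>x. x \<in> G \<and> loxodromic bp Gm \<phi> x \<and> real 0 \<le> I x" using far[of 0] unfolding I_def by force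
    fix x n assume "x \<in> G \<and> loxodromic bp Gm \<phi> x \<and> real n \<le> I x"
    show "\<exists>y. (y \<in> G \<and> loxodromic bp Gm \<phi> y \<and> real (Suc n) \<le> I y) \<and> I x < I y"
      using far[of "max (real (Suc n)) (I x)"] unfolding I_def by force
  qed
  then obtain h where h: "\<And>n. h n \<in> G" "\<And>n. loxodromic bp Gm \<phi> (h n)" "\<And>n. real n \<le> I (h n)"
    "\<And>n. I (h n) < I (h (Suc n))" by blast
  have sm: "strict_mono (\<lambda>n. I (h n))" using h(4) by (simp add: strict_mono_Suc_iff)
  have "inj h"
  proof
    fix m n assume "h m = h n"
    then have "I (h m) = I (h n)" by simp
    then show "m = n" using sm by (metis strict_mono_eq)
  qed
  moreover have "filterlim (\<lambda>n. I (h n)) at_top sequentially"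
    by (rule filterlim_at_top_mono[OF filterlim_real_sequentially]) (use h(3) in auto)
  ultimately show ?thesis using h(1,2) unfolding I_def by blast
qed

end
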